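(* Let $\boldsymbol\Lambda=(\Lambda_1,\dots,\Lambda_m)$, where $\Lambda_1\ge\dots\ge\Lambda_m$ are the $m$ largest eigenvalues of $\mathbb{H}\mathbb{H}^H$ for a random matrix $\mathbb{H}\in\mathbb{C}^{t\times r}$, $m=\min\{t,r\}$. Consider the following auxiliary channel: a code with $M$ codewords and blocklength $n$ is an encoder $f:\{1,\dots,M\}\times\mathbb{R}_+^m\to\mathbb{C}^{n\times m}$ whose output $f(j,\boldsymbol\lambda)=[\mathbf{x}_1,\dots,\mathbf{x}_m]$ satisfies $\sum_{i=1}^m\|\mathbf{x}_i\|^2\le n\rho$, together with a decoder $g$ acting on $(\mathbb{Y},\boldsymbol\Lambda)$; given $\boldsymbol\Lambda=\boldsymbol\lambda$ and message $j$, the output $\mathbb{Y}=[\mathbf{y}_1,\dots,\mathbf{y}_m]\in\mathbb{C}^{n\times m}$ has independent columns $\mathbf{y}_i\sim\mathcal{CN}\big(\mathbf{0},(1+\tilde v_i\lambda_i)I_n\big)$, where $\tilde v_i=\|\mathbf{x}_i\|^2/n$ and $\mathbf{x}_i$ is the $i$th column of $f(j,\boldsymbol\lambda)$. Then for every such code with $M$ codewords and blocklength $n$, the maximal probability of error $\epsilon'=\max_j\Pr[g(\mathbb{Y},\boldsymbol\Lambda)\ne j\mid j]$ satisfies $$1-\epsilon'\le\frac{c_{\mathrm{rt}}(n)}{M},\qquad c_{\mathrm{rt}}(n)=\Big(\frac{(n-1)^ne^{-(n-1)}}{\Gamma(n)}+\frac{\Gamma(n,n-1)}{\Gamma(n)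}\Big)^m\mathbb{E}\big[\det(I_t+\rho\mathbb{H}\mathbb{H}^H)\big].$$
   Context: $\rho>0$ is fixed. $\Gamma(a,x)=\int_x^\infty s^{a-1}e^{-s}ds$ is the upper incomplete Gamma function. $\mathcal{CN}(\mathbf{0},\Sigma)$ is the circularly-symmetric complex Gaussian distribution. *)

theory Defs
  imports "HOL-Probability.Probability" "Jordan_Normal_Form.Schur_Decomposition"
begin

definition upper_Gamma :: "real \<Rightarrow> real \<Rightarrow> real" where
  "upper_Gamma a x = integral {x..} (\<lambda>s. s powr (a - 1) * exp (- s))"

text \<open>Circularly-symmetric complex Gaussian CN(0,s) on the complex plane
  (real and imaginary parts independent N(0,s/2)), given by its density.\<close>
definition cgauss :: "real \<Rightarrow> complex measure" where
  "cgauss s = density lborel (\<lambda>z. ennreal (exp (- (cmod z)\<^sup>2 / s) / (pi * s)))"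

definition top_eigs :: "nat \<Rightarrow> complex mat \<Rightarrow> (nat \<Rightarrow> real)" where
  "top_eigs m A = (\<lambda>i\<in>{..<m}.
     rev (sorted_list_of_multiset (image_mset Re (proots (char_poly A)))) ! i)"

definition col_pow :: "nat \<Rightarrow> complex mat \<Rightarrow> nat \<Rightarrow> real" where
  "col_pow n x i = (\<Sum>k<n. (cmod (x $$ (k, i)))\<^sup>2) / real n"

definition aux_chan :: "nat \<Rightarrow> nat \<Rightarrow> complex mat \<Rightarrow> (nat \<Rightarrow> real) \<Rightarrow> (nat \<times> nat \<Rightarrow> complex) measure" where
  "aux_chan n m x l = PiM ({..<n} \<times> {..<m}) (\<lambda>(k, i). cgauss (1 + col_pow n x i * l i))"

definition c_rt_factor :: "nat \<Rightarrow> real" where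
  "c_rt_factor n = (real (n - 1)) ^ n * exp (- real (n - 1)) / Gamma (real n)
                   + upper_Gamma (real n) (real (n - 1)) / Gamma (real n)"

end

theory Submission
  imports Defs
begin

lemma upper_Gamma_nonneg: "upper_Gamma a x \<ge> 0" if "x \<ge> 0"
proof (cases "(\<lambda>s. s powr (a - 1) * exp (- s)) integrable_on {x..}")
  case True then show ?thesis unfolding upper_Gamma_def
    by (intro integral_nonneg) auto
next
  case False then show ?thesis unfolding upper_Gamma_def by (simp add: not_integrable_integral)
qed

definition hr :: "nat \<Rightarrow> real \<Rightarrow> real \<Rightarrow> real" where
  "hr n S u = (if u \<le> real n then exp (- u) else if u \<le> real n * S then (real n / u) ^ n * exp (- real n)
               else exp (- u / S) / S ^ n) / pi ^ n"

lemma hr_nonneg: "S > 0 \<Longrightarrow> hr n S u \<ge> 0"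
  unfolding hr_def by (auto intro!: divide_nonneg_nonneg mult_nonneg_nonneg)

lemma hr_meas[measurable]: "hr n S \<in> borel_measurable borel"
  unfolding hr_def by measurable

lemma pow_exp_ln: "s > 0 \<Longrightarrow> s ^ n = exp (real n * ln s)"
  by (simp add: exp_of_nat_mult)

lemma exp_div_pow: "s > 0 \<Longrightarrow> exp (- u / s) / s ^ n = exp (- u / s - real n * ln s)"
  by (simp add: exp_diff pow_exp_ln)

lemma dom_core:
  assumes n: "n \<ge> 1" and s: "1 \<le> s" "s \<le> S" and u: "0 \<le> u"
  shows "exp (- u / s) / s ^ n \<le> (if u \<le> real n then exp (- u) else if u \<le> real n * S then (real n / u) ^ n * exp (- real n)
               else exp (- u / S) / S ^ n)"
proof -
  have s0: "s > 0" using s by simp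
  have S0: "S > 0" using s by simp
  have L: "exp (- u / s) / s ^ n = exp (- u / s - real n * ln s)" by (rule exp_div_pow[OF s0])
  consider "u \<le> real n" | "real n < u" "u \<le> real n * S" | "real n * S < u" by linarith
  then show ?thesis
  proof cases
    case 1
    have "ln (1 / s) \<le> 1 / s - 1" using s0 by (intro ln_le_minus_one) simp
    then have l: "1 - 1 / s \<le> ln s" using s0 by (simp add: ln_div)
    have "u * (1 - 1 / s) \<le> real n * (1 - 1 / s)" using 1 s by (intro mult_right_mono) (auto simp: field_simps)
    also have "\<dots> \<le> real n * ln s" using l by (intro mult_left_mono) auto
    finally have "- u / s - real n * ln s \<le> - u" by (simp add: field_simps)
    then show ?thesis using 1 L by simp
  next
    case 2
    have u0: "u > 0" using 2 n by linarith
    define x where "x = u / (real n * s)"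
    have x0: "x > 0" unfolding x_def using u0 s0 n by simp
    have "ln x \<le> x - 1" using x0 by (rule ln_le_minus_one)
    then have "real n * ln x \<le> real n * (x - 1)" by (intro mult_left_mono) auto
    moreover have "ln x = ln u - ln (real n) - ln s" unfolding x_def using u0 s0 n by (simp add: ln_div ln_mult)
    moreover have "real n * x = u / s" unfolding x_def using n by (simp add: field_simps)
    ultimately have ineq: "- u / s - real n * ln s \<le> real n * (ln (real n) - ln u) - real n"
      by (simp add: algebra_simps)
    have R: "(real n / u) ^ n * exp (- real n) = exp (real n * (ln (real n) - ln u) - real n)"
    proof -
      have a: "(real n / u) ^ n = exp (real n * (ln (real n) - ln u))"
        using pow_exp_ln[of "real n / u" n] u0 n by (simp add: ln_div)
      show ?thesis by (simp only: exp_diff exp_minus divide_inverse a[symmetric])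
    qed
    show ?thesis using 2 L R ineq by simp
  next
    case 3
    have u0: "u > 0" using 3 S0 n by (smt (verit) mult_nonneg_nonneg of_nat_0_le_iff)
    have "ln (S / s) \<le> S / s - 1" using s0 S0 by (intro ln_le_minus_one) simp
    moreover have "S / s - 1 = S * (1 / s - 1 / S)" using S0 s0 by (simp add: field_simps)
    moreover have "real n * (S * (1 / s - 1 / S)) \<le> u * (1 / s - 1 / S)"
    proof -
      have "1 / s - 1 / S \<ge> 0" using s s0 by (simp add: frac_le)
      then show ?thesis using 3 by (simp add: mult_right_mono mult.assoc[symmetric])
    qed
    ultimately have "real n * ln (S / s) \<le> u * (1 / s - 1 / S)"
      by (smt (verit) mult_left_mono of_nat_0_le_iff)
    then have ineq: "- u / s - real n * ln s \<le> - u / S - real n * ln S"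
      using s0 S0 by (simp add: ln_div algebra_simps)
    have R: "exp (- u / S) / S ^ n = exp (- u / S - real n * ln S)" by (rule exp_div_pow[OF S0])
    have "real n * 1 \<le> real n * S" using s by (intro mult_left_mono) auto
    then have nu: "\<not> u \<le> real n" "\<not> u \<le> real n * S" using 3 by auto
    show ?thesis using L R ineq nu by simp
  qed
qed

lemma dom:
  assumes n: "n \<ge> 1" and s: "1 \<le> s" "s \<le> S" and u: "0 \<le> u"
  shows "exp (- u / s) / (pi * s) ^ n \<le> hr n S u"
proof -
  have "exp (- u / s) / (pi * s) ^ n = (exp (- u / s) / s ^ n) / pi ^ n"
    by (simp add: power_mult_distrib field_simps)
  also have "\<dots> \<le> hr n S u" unfolding hr_def
    by (intro divide_right_mono dom_core[OF n s u]) auto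
  finally show ?thesis .
qed

lemma UG_powr:
  assumes n: "n \<ge> 1" and c: "c \<ge> 0"
  shows "ennreal (upper_Gamma (real n) c) = (\<integral>\<^sup>+ s. ennreal (indicator {c..} s * (s powr (real n - 1) * exp (- s))) \<partial>lborel)"
proof -
  define g where "g = (\<lambda>s. indicator {c..} s * (s powr (real n - 1) * exp (- s)))"
  have gm[measurable]: "g \<in> borel_measurable borel" unfolding g_def by measurable
  have g0: "g s \<ge> 0" for s unfolding g_def by auto
  have "(\<integral>\<^sup>+ s. ennreal (g s) \<partial>lborel) \<le> (\<integral>\<^sup>+ t. ennreal (indicator {0..} t * t powr (real n - 1) / exp t) \<partial>lborel)"
    unfolding g_def using c
    by (intro nn_integral_mono ennreal_leI) (auto simp: indicator_def exp_minus field_simps)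
  also have "\<dots> = ennreal (Gamma (real n))"
    using Gamma_conv_nn_integral_real[of "real n"] n by simp
  finally have "(\<integral>\<^sup>+ s. ennreal (g s) \<partial>lborel) < \<infinity>" by (simp add: le_less_trans)
  then obtain r where r: "(\<integral>\<^sup>+ s. ennreal (g s) \<partial>lborel) = ennreal r" "r \<ge> 0"
    by (cases "(\<integral>\<^sup>+ s. ennreal (g s) \<partial>lborel)") auto
  have "(g has_integral r) UNIV" by (rule nn_integral_has_integral[OF gm g0 r])
  then have "((\<lambda>s. if s \<in> {c..} then s powr (real n - 1) * exp (- s) else 0) has_integral r) UNIV"
    by (rule has_integral_eq[rotated]) (simp add: g_def indicator_def)
  then have "((\<lambda>s. s powr (real n - 1) * exp (- s)) has_integral r) {c..}"
    by (simp only: has_integral_restrict_UNIV)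
  then have "upper_Gamma (real n) c = r" unfolding upper_Gamma_def by (rule integral_unique)
  then show ?thesis using r g_def by simp
qed

lemma UG_pow:
  assumes n: "n \<ge> 1" and c: "c \<ge> 0"
  shows "ennreal (upper_Gamma (real n) c) = (\<integral>\<^sup>+ s. ennreal (s ^ (n - 1) * exp (- s)) * indicator {c..} s \<partial>lborel)"
  unfolding UG_powr[OF n c]
proof (rule nn_integral_cong_AE)
  show "AE s in lborel. ennreal (indicator {c..} s * (s powr (real n - 1) * exp (- s))) =
      ennreal (s ^ (n - 1) * exp (- s)) * indicator {c..} s"
    using AE_lborel_singleton[of 0]
  proof eventually_elim
    case (elim s)
    show ?case
    proof (cases "s \<in> {c..}")
      case True
      then have "s > 0" using elim c by auto
      then have "s powr (real n - 1) = s ^ (n - 1)" using n by (simp add: powr_realpow[symmetric] of_nat_diff)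
      then show ?thesis using True by simp
    qed simp
  qed
qed

lemma max_bound:
  assumes n: "n \<ge> 1" and w: "w \<ge> 0"
  shows "w ^ (n - 1) * exp (- w) \<le> real (n - 1) ^ (n - 1) * exp (- real (n - 1))"
proof (cases "n = 1")
  case True then show ?thesis using w by simp
next
  case False
  define c where "c = real (n - 1)"
  have c1: "c \<ge> 1" using False n c_def by simp
  show ?thesis
  proof (cases "w = 0")
    case True then show ?thesis using False c1 n by (simp add: c_def[symmetric] power_0_left)
  next
    case False
    then have w0: "w > 0" using w by simp
    have "ln (w / c) \<le> w / c - 1" using w0 c1 by (intro ln_le_minus_one) simp
    then have "c * ln (w / c) \<le> c * (w / c - 1)" using c1 by (intro mult_left_mono) auto
    moreover have "c * ln (w / c) = c * ln w - c * ln c" using c1 w0 by (simp add: ln_div right_diff_distrib)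
    moreover have "c * (w / c - 1) = w - c" using c1 by (simp add: field_simps)
    ultimately have "c * ln w - w \<le> c * ln c - c" by linarith
    then have "exp (c * ln w - w) \<le> exp (c * ln c - c)" by simp
    moreover have "w ^ (n - 1) * exp (- w) = exp (c * ln w - w)"
      using w0 by (simp add: c_def pow_exp_ln exp_diff exp_minus divide_inverse)
    moreover have "c ^ (n - 1) * exp (- c) = exp (c * ln c - c)"
      using c1 by (simp add: c_def pow_exp_ln exp_diff exp_minus divide_inverse)
    ultimately show ?thesis by (simp add: c_def)
  qed
qed

lemma exp_tail: "(\<integral>\<^sup>+ s. ennreal (exp (- s)) * indicator {c..} s \<partial>lborel) = ennreal (exp (- c))"
proof -
  have l: "((\<lambda>x::real. exp (- x)) \<longlongrightarrow> 0) at_top"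
    by (rule filterlim_compose[OF exp_at_bot filterlim_uminus_at_bot_at_top])
  have lim: "((\<lambda>x::real. - exp (- x)) \<longlongrightarrow> (0::real)) at_top"
    using tendsto_minus[OF l] by simp
  have "(\<integral>\<^sup>+ s. ennreal (exp (- s)) * indicator {c..} s \<partial>lborel) = ennreal (0 - (- exp (- c)))"
    by (rule nn_integral_FTC_atLeast[OF _ _ _ lim]) (auto intro!: derivative_eq_intros)
  then show ?thesis by simp
qed

lemma UG_lower:
  assumes n: "n \<ge> 1"
  shows "real (n - 1) ^ (n - 1) * exp (- real (n - 1)) \<le> upper_Gamma (real n) (real (n - 1))"
proof -
  define c where "c = real (n - 1)"
  have c0: "c \<ge> 0" unfolding c_def by simp
  have "ennreal (c ^ (n - 1) * exp (- c)) = ennreal (c ^ (n - 1)) * (\<integral>\<^sup>+ s. ennreal (exp (- s)) * indicator {c..} s \<partial>lborel)"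
    using c0 by (simp add: exp_tail ennreal_mult)
  also have "\<dots> = (\<integral>\<^sup>+ s. ennreal (c ^ (n - 1)) * (ennreal (exp (- s)) * indicator {c..} s) \<partial>lborel)"
    by (rule nn_integral_cmult[symmetric]) measurable
  also have "\<dots> \<le> (\<integral>\<^sup>+ s. ennreal (s ^ (n - 1) * exp (- s)) * indicator {c..} s \<partial>lborel)"
    using c0 by (intro nn_integral_mono) (auto simp: ennreal_mult[symmetric] intro!: ennreal_leI mult_right_mono power_mono split: split_indicator)
  also have "\<dots> = ennreal (upper_Gamma (real n) c)"
    using UG_pow[OF n c0] by simp
  finally show ?thesis unfolding c_def
    by (subst (asm) ennreal_le_iff) (auto intro!: upper_Gamma_nonneg)
qed

lemma T_bound:
  assumes n: "n \<ge> 1"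
  shows "(\<integral>\<^sup>+ w. ennreal (w ^ (n - 1) * exp (- w)) * indicator {0..} w \<partial>lborel)
         \<le> ennreal (real (n - 1) ^ n * exp (- real (n - 1)) + upper_Gamma (real n) (real (n - 1)))"
proof -
  define c where "c = real (n - 1)"
  have c0: "c \<ge> 0" unfolding c_def by simp
  define f where "f = (\<lambda>w::real. ennreal (w ^ (n - 1) * exp (- w)))"
  have fm[measurable]: "f \<in> borel_measurable borel" unfolding f_def by measurable
  have "(\<integral>\<^sup>+ w. f w * indicator {0..} w \<partial>lborel) = (\<integral>\<^sup>+ w. f w * indicator {0..<c} w + f w * indicator {c..} w \<partial>lborel)"
    using c0 by (intro nn_integral_cong) (auto split: split_indicator)
  also have "\<dots> = (\<integral>\<^sup>+ w. f w * indicator {0..<c} w \<partial>lborel) + (\<integral>\<^sup>+ w. f w * indicator {c..} w \<partial>lborel)"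
    by (rule nn_integral_add) measurable
  also have "(\<integral>\<^sup>+ w. f w * indicator {c..} w \<partial>lborel) = ennreal (upper_Gamma (real n) c)"
    unfolding f_def using UG_pow[OF n c0] by simp
  also have "(\<integral>\<^sup>+ w. f w * indicator {0..<c} w \<partial>lborel) \<le> (\<integral>\<^sup>+ w. ennreal (c ^ (n - 1) * exp (- c)) * indicator {0..<c} w \<partial>lborel)"
    unfolding f_def c_def using max_bound[OF n]
    by (intro nn_integral_mono) (auto intro!: ennreal_leI split: split_indicator)
  also have "\<dots> = ennreal (c ^ (n - 1) * exp (- c)) * ennreal c"
    using c0 by (subst nn_integral_cmult_indicator) auto
  also have "ennreal (c ^ (n - 1) * exp (- c)) * ennreal c = ennreal (c ^ n * exp (- c))"
  proof -
    have "c ^ (n - 1) * exp (- c) * c = c ^ n * exp (- c)"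
      using n by (cases n) (auto simp: field_simps)
    then show ?thesis using c0 by (simp add: ennreal_mult[symmetric])
  qed
  finally show ?thesis
    using c0 upper_Gamma_nonneg[OF c0, of "real n"] unfolding f_def c_def
    by (simp add: ennreal_plus[symmetric] del: ennreal_plus)
qed

lemma a_le_C:
  assumes n: "n \<ge> 1"
  shows "real n ^ n * exp (- real n) \<le> real (n - 1) ^ n * exp (- real (n - 1)) + upper_Gamma (real n) (real (n - 1))"
proof -
  define c where "c = real (n - 1)"
  have c0: "c \<ge> 0" unfolding c_def by simp
  have nc: "real n = c + 1" unfolding c_def using n by (simp add: of_nat_diff)
  have key: "real n ^ (n - 1) \<le> exp 1 * c ^ (n - 1)"
  proof (cases "n = 1")
    case True then show ?thesis by simp
  next
    case False
    then have c1: "c \<ge> 1" using n c_def by simp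
    have "(1 + 1 / real (n - 1)) ^ (n - 1) \<le> exp 1"
      using False n by (intro exp_ge_one_plus_x_over_n_power_n) auto
    then have "(1 + 1 / c) ^ (n - 1) \<le> exp 1" unfolding c_def .
    then have "c ^ (n - 1) * (1 + 1 / c) ^ (n - 1) \<le> c ^ (n - 1) * exp 1"
      using c0 by (intro mult_left_mono) auto
    moreover have "c ^ (n - 1) * (1 + 1 / c) ^ (n - 1) = real n ^ (n - 1)"
      using c1 nc by (simp add: power_mult_distrib[symmetric] field_simps)
    ultimately show ?thesis by (simp add: mult.commute)
  qed
  have "real n ^ n * exp (- real n) = real n * (real n ^ (n - 1) * exp (- real n))"
    using n by (cases n) auto
  also have "\<dots> \<le> real n * (exp 1 * c ^ (n - 1) * exp (- real n))"
    using key by (intro mult_left_mono mult_right_mono) auto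
  also have "exp 1 * c ^ (n - 1) * exp (- real n) = c ^ (n - 1) * exp (- c)"
    using nc by (simp add: mult_exp_exp)
  also have "real n * (c ^ (n - 1) * exp (- c)) = c ^ n * exp (- c) + c ^ (n - 1) * exp (- c)"
    using n nc by (cases n) (auto simp: field_simps)
  also have "\<dots> \<le> c ^ n * exp (- c) + upper_Gamma (real n) c"
    using UG_lower[OF n] unfolding c_def by simp
  finally show ?thesis unfolding c_def .
qed

lemma c_rt_nonneg: "c_rt_factor n \<ge> 0"
proof -
  have "Gamma (real n) \<ge> 0"
    by (cases n) (auto intro: less_imp_le Gamma_real_pos)
  then show ?thesis unfolding c_rt_factor_def
    by (intro add_nonneg_nonneg divide_nonneg_nonneg mult_nonneg_nonneg upper_Gamma_nonneg) auto
qed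

lemma mid_bound:
  assumes n: "n \<ge> 1" and u: "real n < u"
  shows "(real n / u) ^ n * exp (- real n) * u ^ (n - 1) \<le> real n ^ (n - 1) * exp (- real n)"
proof -
  have u0: "u > 0" using u n by linarith
  have "(real n / u) ^ n * u ^ (n - 1) = real n ^ n / u"
    using n u0 by (cases n) (auto simp: power_divide field_simps)
  also have "\<dots> \<le> real n ^ n / real n" using u n by (intro divide_left_mono) auto
  also have "\<dots> = real n ^ (n - 1)" using n by (cases n) auto
  finally have "(real n / u) ^ n * u ^ (n - 1) \<le> real n ^ (n - 1)" .
  then show ?thesis by (simp add: mult.commute mult.left_commute mult_left_mono)
qed

lemma col_int:
  assumes n: "n \<ge> 1" and S: "S \<ge> 1"
  shows "ennreal (pi ^ n / fact (n - 1)) * (\<integral>\<^sup>+ u. ennreal (hr n S u) * ennreal (u ^ (n - 1)) * indicator {0..} u \<partial>lborel)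
         \<le> ennreal (c_rt_factor n * S)"
proof -
  define N where "N = real n"
  define c where "c = real (n - 1)"
  define UG where "UG = upper_Gamma (real n) (real (n - 1))"
  define C where "C = c ^ n * exp (- c) + UG"
  define a where "a = N ^ n * exp (- N)"
  have N1: "N \<ge> 1" unfolding N_def using n by simp
  have S0: "S > 0" using S by simp
  have UG0: "UG \<ge> 0" unfolding UG_def by (rule upper_Gamma_nonneg) simp
  have C0: "C \<ge> 0" unfolding C_def c_def using UG0 by simp
  have aC: "a \<le> C" unfolding a_def C_def N_def c_def UG_def by (rule a_le_C[OF n])
  define p1 where "p1 = (\<lambda>u. ennreal (u ^ (n - 1) * exp (- u)) * indicator {0..N} u)"
  define p2 where "p2 = (\<lambda>u. ennreal (N ^ (n - 1) * exp (- N)) * indicator {N<..N*S} u)"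
  define p3 where "p3 = (\<lambda>u. ennreal (exp (- u / S) / S ^ n * u ^ (n - 1)) * indicator {N*S<..} u)"
  have [measurable]: "p1 \<in> borel_measurable borel" "p2 \<in> borel_measurable borel" "p3 \<in> borel_measurable borel"
    unfolding p1_def p2_def p3_def by measurable
  have NS: "N \<le> N * S" using N1 S by simp
  have pw: "ennreal (hr n S u) * ennreal (u ^ (n - 1)) * indicator {0..} u \<le> ennreal (1 / pi ^ n) * (p1 u + p2 u + p3 u)" for u
  proof (cases "u \<ge> 0")
    case False then show ?thesis by simp
  next
    case True
    consider "u \<le> N" | "N < u" "u \<le> N * S" | "N * S < u" by linarith
    then show ?thesis
    proof cases
      case 1
      have "ennreal (hr n S u) * ennreal (u ^ (n - 1)) * indicator {0..} u = ennreal (1 / pi ^ n) * p1 u"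
        using 1 True unfolding p1_def hr_def N_def
        by (simp add: ennreal_mult[symmetric] mult.commute mult.left_commute)
      also have "\<dots> \<le> ennreal (1 / pi ^ n) * (p1 u + p2 u + p3 u)"
        by (intro mult_left_mono) (auto simp: add.assoc)
      finally show ?thesis .
    next
      case 2
      have "hr n S u * u ^ (n - 1) \<le> N ^ (n - 1) * exp (- N) / pi ^ n"
        using 2 mid_bound[OF n, of u] unfolding hr_def N_def
        by (simp add: divide_right_mono mult.commute mult.left_commute)
      moreover have "ennreal (1 / pi ^ n) * p2 u = ennreal (N ^ (n - 1) * exp (- N) / pi ^ n)"
        using 2 N1 unfolding p2_def by (simp add: ennreal_mult[symmetric] divide_inverse mult.commute)
      moreover have "ennreal (hr n S u) * ennreal (u ^ (n - 1)) * indicator {0..} u = ennreal (hr n S u * u ^ (n - 1))"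
        using True hr_nonneg[OF S0] by (simp add: ennreal_mult)
      ultimately have "ennreal (hr n S u) * ennreal (u ^ (n - 1)) * indicator {0..} u \<le> ennreal (1 / pi ^ n) * p2 u"
        by (simp add: ennreal_leI)
      also have "\<dots> \<le> ennreal (1 / pi ^ n) * (p1 u + p2 u + p3 u)"
        by (intro mult_left_mono) (auto simp: add.commute add.left_commute)
      finally show ?thesis .
    next
      case 3
      have "\<not> u \<le> N" using 3 NS by linarith
      then have "ennreal (hr n S u) * ennreal (u ^ (n - 1)) * indicator {0..} u = ennreal (1 / pi ^ n) * p3 u"
        using 3 True S0 unfolding p3_def hr_def N_def
        by (simp add: ennreal_mult[symmetric] field_simps)
      also have "\<dots> \<le> ennreal (1 / pi ^ n) * (p1 u + p2 u + p3 u)"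
        by (intro mult_left_mono) auto
      finally show ?thesis .
    qed
  qed
  have "(\<integral>\<^sup>+ u. ennreal (hr n S u) * ennreal (u ^ (n - 1)) * indicator {0..} u \<partial>lborel)
      \<le> (\<integral>\<^sup>+ u. ennreal (1 / pi ^ n) * (p1 u + p2 u + p3 u) \<partial>lborel)"
    by (intro nn_integral_mono pw)
  also have "\<dots> = ennreal (1 / pi ^ n) * ((\<integral>\<^sup>+ u. p1 u \<partial>lborel) + (\<integral>\<^sup>+ u. p3 u \<partial>lborel) + (\<integral>\<^sup>+ u. p2 u \<partial>lborel))"
    by (simp add: nn_integral_cmult nn_integral_add add_ac)
  also have "(\<integral>\<^sup>+ u. p2 u \<partial>lborel) = ennreal (a * (S - 1))"
  proof -
    have "(\<integral>\<^sup>+ u. p2 u \<partial>lborel) = ennreal (N ^ (n - 1) * exp (- N)) * ennreal (N * S - N)"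
      unfolding p2_def using NS by (subst nn_integral_cmult_indicator) auto
    also have "\<dots> = ennreal (a * (S - 1))"
      unfolding a_def using n N1 NS by (cases n) (auto simp: ennreal_mult[symmetric] field_simps N_def)
    finally show ?thesis .
  qed
  also have "(\<integral>\<^sup>+ u. p3 u \<partial>lborel) = (\<integral>\<^sup>+ w. ennreal (w ^ (n - 1) * exp (- w)) * indicator {N<..} w \<partial>lborel)"
  proof -
    have "(\<integral>\<^sup>+ u. p3 u \<partial>lborel) = ennreal \<bar>S\<bar> * (\<integral>\<^sup>+ w. p3 (0 + S * w) \<partial>lborel)"
      using nn_integral_real_affine[of p3 S 0] S0 by simp
    also have "\<dots> = ennreal S * (\<integral>\<^sup>+ w. p3 (S * w) \<partial>lborel)"
      using S0 by simp
    also have "\<dots> = (\<integral>\<^sup>+ w. ennreal S * p3 (S * w) \<partial>lborel)"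
      by (rule nn_integral_cmult[symmetric]) measurable
    also have "\<dots> = (\<integral>\<^sup>+ w. ennreal (w ^ (n - 1) * exp (- w)) * indicator {N<..} w \<partial>lborel)"
    proof (rule nn_integral_cong)
      fix w
      have "S * (exp (- (S * w) / S) / S ^ n * (S * w) ^ (n - 1)) = w ^ (n - 1) * exp (- w)"
        using S0 n by (cases n) (auto simp: power_mult_distrib field_simps)
      moreover have "(S * w \<in> {N*S<..}) = (w \<in> {N<..})" using S0 by (auto simp: mult.commute)
      ultimately show "ennreal S * p3 (S * w) = ennreal (w ^ (n - 1) * exp (- w)) * indicator {N<..} w"
        unfolding p3_def using S0 N1
        by (auto simp: ennreal_mult[symmetric] mult.assoc[symmetric] split: split_indicator)
    qed
    finally show ?thesis .
  qed
  also have "(\<integral>\<^sup>+ u. p1 u \<partial>lborel) + (\<integral>\<^sup>+ w. ennreal (w ^ (n - 1) * exp (- w)) * indicator {N<..} w \<partial>lborel)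
      = (\<integral>\<^sup>+ w. ennreal (w ^ (n - 1) * exp (- w)) * indicator {0..} w \<partial>lborel)"
    unfolding p1_def using N1
    by (subst nn_integral_add[symmetric]) (measurable, auto intro!: nn_integral_cong split: split_indicator)
  also have "\<dots> \<le> ennreal C"
    using T_bound[OF n] unfolding C_def c_def UG_def .
  finally have I: "(\<integral>\<^sup>+ u. ennreal (hr n S u) * ennreal (u ^ (n - 1)) * indicator {0..} u \<partial>lborel)
      \<le> ennreal (1 / pi ^ n) * (ennreal C + ennreal (a * (S - 1)))"
    by (simp add: mult_left_mono add_right_mono)
  have "ennreal (pi ^ n / fact (n - 1)) * (\<integral>\<^sup>+ u. ennreal (hr n S u) * ennreal (u ^ (n - 1)) * indicator {0..} u \<partial>lborel)
      \<le> ennreal (pi ^ n / fact (n - 1)) * (ennreal (1 / pi ^ n) * (ennreal C + ennreal (a * (S - 1))))"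
    by (intro mult_left_mono I) simp
  also have "\<dots> = ennreal ((C + a * (S - 1)) / fact (n - 1))"
  proof -
    have a0: "a \<ge> 0" unfolding a_def N_def by simp
    have X0: "C + a * (S - 1) \<ge> 0" using C0 a0 S by simp
    have "ennreal C + ennreal (a * (S - 1)) = ennreal (C + a * (S - 1))"
      using C0 a0 S by (simp add: ennreal_plus)
    moreover have "ennreal (pi ^ n / fact (n - 1)) * (ennreal (1 / pi ^ n) * ennreal (C + a * (S - 1)))
        = ennreal (pi ^ n / fact (n - 1) * (1 / pi ^ n * (C + a * (S - 1))))"
    proof -
      have f1: "0 \<le> pi ^ n / fact (n - 1)" and f2: "0 \<le> 1 / pi ^ n" and f3: "0 \<le> 1 / pi ^ n * (C + a * (S - 1))"
        using X0 by auto
      show ?thesis by (simp only: ennreal_mult[OF f2 X0, symmetric] ennreal_mult[OF f1 f3, symmetric])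
    qed
    moreover have "pi ^ n / fact (n - 1) * (1 / pi ^ n * (C + a * (S - 1))) = (C + a * (S - 1)) / fact (n - 1)"
      by (simp add: field_simps)
    ultimately show ?thesis by simp
  qed
  also have "\<dots> \<le> ennreal (c_rt_factor n * S)"
  proof (rule ennreal_leI)
    have G: "Gamma (real n) = fact (n - 1)"
      using Gamma_fact[of "n - 1"] n by (simp add: of_nat_diff)
    have cr: "c_rt_factor n = C / fact (n - 1)"
      unfolding c_rt_factor_def C_def c_def UG_def G by (simp add: add_divide_distrib)
    have "a * (S - 1) \<le> C * (S - 1)" using aC S by (intro mult_right_mono) auto
    then have "C + a * (S - 1) \<le> C * S" by (simp add: algebra_simps)
    then show "(C + a * (S - 1)) / fact (n - 1) \<le> c_rt_factor n * S"
      unfolding cr by (simp add: divide_right_mono)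
  qed
  finally show ?thesis .
qed

lemma sets_borel_atMost_real: "sets (borel :: real measure) = sigma_sets UNIV (range atMost)"
  by (subst borel_eq_atMost) simp

lemma radial2:
  fixes F :: "real \<Rightarrow> ennreal"
  assumes Fm[measurable]: "F \<in> borel_measurable borel"
  shows "(\<integral>\<^sup>+ z. F ((cmod z)\<^sup>2) \<partial>(lborel::complex measure)) = ennreal pi * (\<integral>\<^sup>+ u. F u * indicator {0..} u \<partial>lborel)"
proof -
  define M1 where "M1 = distr (lborel::complex measure) borel (\<lambda>z. (cmod z)\<^sup>2)"
  define M2 where "M2 = density (lborel::real measure) (\<lambda>u. ennreal pi * indicator {0..} u)"
  have M1b: "emeasure M1 {..b} = ennreal (pi * max b 0)" for b
  proof (cases "b \<ge> 0")
    case True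
    have "emeasure M1 {..b} = emeasure (lborel::complex measure) {z. (cmod z)\<^sup>2 \<le> b}"
      unfolding M1_def by (subst emeasure_distr) (auto intro!: arg_cong2[where f=emeasure])
    also have "{z::complex. (cmod z)\<^sup>2 \<le> b} = cball 0 (sqrt b)"
      using True by (auto simp: real_le_rsqrt dist_norm) (metis norm_ge_zero real_sqrt_le_iff real_sqrt_unique)
    also have "emeasure lborel (cball (0::complex) (sqrt b)) = ennreal (unit_ball_vol (real DIM(complex)) * sqrt b ^ DIM(complex))"
      using True by (intro emeasure_cball) simp
    also have "unit_ball_vol (real DIM(complex)) * sqrt b ^ DIM(complex) = pi * max b 0"
      using True by (simp add: unit_ball_vol_2)
    finally show ?thesis .
  next
    case False
    have "emeasure M1 {..b} = emeasure (lborel::complex measure) {z. (cmod z)\<^sup>2 \<le> b}"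
      unfolding M1_def by (subst emeasure_distr) (auto intro!: arg_cong2[where f=emeasure])
    also have "{z::complex. (cmod z)\<^sup>2 \<le> b} = {}"
      using False by (auto simp: not_le) (smt (verit) zero_le_power2)
    finally show ?thesis using False by simp
  qed
  have M2b: "emeasure M2 {..b} = ennreal (pi * max b 0)" for b
  proof -
    have "emeasure M2 {..b} = (\<integral>\<^sup>+ u. ennreal pi * indicator {0..b} u \<partial>lborel)"
      unfolding M2_def by (subst emeasure_density) (auto intro!: nn_integral_cong split: split_indicator)
    also have "\<dots> = ennreal pi * emeasure lborel {0..b}"
      by (subst nn_integral_cmult) auto
    also have "\<dots> = ennreal (pi * max b 0)"
      by (cases "b \<ge> 0") (auto simp: ennreal_mult)
    finally show ?thesis .
  qed
  have eq: "M1 = M2"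
  proof (rule measure_eqI_generator_eq[where \<Omega>=UNIV and E="range atMost" and A="\<lambda>i. {..real i}"])
    show "Int_stable (range atMost :: real set set)"
      by (auto simp: Int_stable_def)
    show "sets M1 = sigma_sets UNIV (range atMost)" unfolding M1_def
      by (simp add: sets_borel_atMost_real)
    show "sets M2 = sigma_sets UNIV (range atMost)" unfolding M2_def
      by (simp add: sets_borel_atMost_real)
    show "\<And>X. X \<in> range atMost \<Longrightarrow> emeasure M1 X = emeasure M2 X"
      using M1b M2b by auto
    show "emeasure M1 {..real i} \<noteq> \<infinity>" for i using M1b by simp
    show "(\<Union>i. {..real i}) = UNIV" by (auto intro: real_arch_simple)
  qed auto
  have "(\<integral>\<^sup>+ z. F ((cmod z)\<^sup>2) \<partial>(lborel::complex measure)) = integral\<^sup>N M1 F"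
    unfolding M1_def by (subst nn_integral_distr) auto
  also have "\<dots> = integral\<^sup>N M2 F" by (simp add: eq)
  also have "\<dots> = (\<integral>\<^sup>+ u. ennreal pi * (F u * indicator {0..} u) \<partial>lborel)"
    unfolding M2_def by (subst nn_integral_density) (auto intro!: nn_integral_cong simp: ac_simps)
  also have "\<dots> = ennreal pi * (\<integral>\<^sup>+ u. F u * indicator {0..} u \<partial>lborel)"
    by (rule nn_integral_cmult) auto
  finally show ?thesis .
qed

lemma conv_lemma:
  fixes G :: "real \<Rightarrow> ennreal"
  assumes Gm[measurable]: "G \<in> borel_measurable borel" and k: "k \<ge> 1"
  shows "(\<integral>\<^sup>+ v. indicator {0..} v * (\<integral>\<^sup>+ u. G (v + u) * ennreal (u ^ (k - 1)) * indicator {0..} u \<partial>lborel) \<partial>lborel)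
       = ennreal (1 / real k) * (\<integral>\<^sup>+ w. G w * ennreal (w ^ k) * indicator {0..} w \<partial>lborel)"
proof -
  have [measurable]: "Measurable.pred (borel \<Otimes>\<^sub>M borel) (\<lambda>x::real\<times>real. fst x \<in> {snd x..})"
    unfolding atLeast_iff by measurable
  have inner: "(\<integral>\<^sup>+ u. G (v + u) * ennreal (u ^ (k - 1)) * indicator {0..} u \<partial>lborel)
      = (\<integral>\<^sup>+ w. G w * ennreal ((w - v) ^ (k - 1)) * indicator {v..} w \<partial>lborel)" for v
  proof -
    have "(\<integral>\<^sup>+ w. G w * ennreal ((w - v) ^ (k - 1)) * indicator {v..} w \<partial>lborel)
        = (\<integral>\<^sup>+ x. G (v + 1 * x) * ennreal ((v + 1 * x - v) ^ (k - 1)) * indicator {v..} (v + 1 * x) \<partial>lborel)"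
      using nn_integral_real_affine[of "\<lambda>w. G w * ennreal ((w - v) ^ (k - 1)) * indicator {v..} w" 1 v]
      by simp
    also have "\<dots> = (\<integral>\<^sup>+ u. G (v + u) * ennreal (u ^ (k - 1)) * indicator {0..} u \<partial>lborel)"
      by (auto intro!: nn_integral_cong split: split_indicator)
    finally show ?thesis by simp
  qed
  have "(\<integral>\<^sup>+ v. indicator {0..} v * (\<integral>\<^sup>+ u. G (v + u) * ennreal (u ^ (k - 1)) * indicator {0..} u \<partial>lborel) \<partial>lborel)
      = (\<integral>\<^sup>+ v. \<integral>\<^sup>+ w. indicator {0..} v * (G w * ennreal ((w - v) ^ (k - 1)) * indicator {v..} w) \<partial>lborel \<partial>lborel)"
    by (simp only: inner) (intro nn_integral_cong, subst nn_integral_cmult[symmetric], auto)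
  also have "\<dots> = (\<integral>\<^sup>+ w. \<integral>\<^sup>+ v. indicator {0..} v * (G w * ennreal ((w - v) ^ (k - 1)) * indicator {v..} w) \<partial>lborel \<partial>lborel)"
    by (rule lborel_pair.Fubini') measurable
  also have "\<dots> = (\<integral>\<^sup>+ w. G w * ennreal (w ^ k / real k) * indicator {0..} w \<partial>lborel)"
  proof (rule nn_integral_cong)
    fix w :: real
    have J: "(\<integral>\<^sup>+ v. ennreal ((w - v) ^ (k - 1)) * indicator {0..w} v \<partial>lborel) = ennreal (w ^ k / real k) * indicator {0..} w"
    proof (cases "w \<ge> 0")
      case True
      have j1: "(\<integral>\<^sup>+ v. ennreal ((w - v) ^ (k - 1)) * indicator {0..w} v \<partial>lborel)
          = ennreal ((\<lambda>v. - ((w - v) ^ k / real k)) w - (\<lambda>v. - ((w - v) ^ k / real k)) 0)"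
      proof (rule nn_integral_FTC_Icc)
        fix x assume "x \<in> {0..w}"
        show "((\<lambda>v. - ((w - v) ^ k / real k)) has_real_derivative (w - x) ^ (k - 1)) (at x)"
          using k by (auto intro!: derivative_eq_intros simp: field_simps)
        show "0 \<le> (w - x) ^ (k - 1)" using \<open>x \<in> {0..w}\<close> by simp
      qed (use True in auto)
      have j2: "ennreal ((\<lambda>v. - ((w - v) ^ k / real k)) w - (\<lambda>v. - ((w - v) ^ k / real k)) 0)
          = ennreal (w ^ k / real k) * indicator {0..} w"
        using True k by (simp add: power_0_left)
      show ?thesis using j1 j2 by simp
    next
      case False
      then have "{0..w} = {}" by auto
      then show ?thesis using False by simp
    qed
    have "(\<integral>\<^sup>+ v. indicator {0..} v * (G w * ennreal ((w - v) ^ (k - 1)) * indicator {v..} w) \<partial>lborel)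
        = G w * (\<integral>\<^sup>+ v. ennreal ((w - v) ^ (k - 1)) * indicator {0..w} v \<partial>lborel)"
      by (subst nn_integral_cmult[symmetric]) (auto intro!: nn_integral_cong split: split_indicator)
    also note J
    finally show "(\<integral>\<^sup>+ v. indicator {0..} v * (G w * ennreal ((w - v) ^ (k - 1)) * indicator {v..} w) \<partial>lborel)
       = G w * ennreal (w ^ k / real k) * indicator {0..} w"
      by (simp add: mult.assoc)
  qed
  also have "\<dots> = (\<integral>\<^sup>+ w. ennreal (1 / real k) * (G w * ennreal (w ^ k) * indicator {0..} w) \<partial>lborel)"
    by (intro nn_integral_cong) (auto simp: ennreal_mult'[symmetric] ennreal_mult[symmetric] divide_inverse ac_simps split: split_indicator)
  also have "\<dots> = ennreal (1 / real k) * (\<integral>\<^sup>+ w. G w * ennreal (w ^ k) * indicator {0..} w \<partial>lborel)"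
    by (rule nn_integral_cmult) measurable
  finally show ?thesis .
qed

lemma psf_lborel: "product_sigma_finite (\<lambda>_::'i. lborel :: 'a::euclidean_space measure)"
  by (simp add: product_sigma_finite_def lborel.sigma_finite_measure_axioms)

lemma radialN:
  fixes B :: "'i set" and G :: "real \<Rightarrow> ennreal"
  assumes "finite B" "B \<noteq> {}" "G \<in> borel_measurable borel"
  shows "(\<integral>\<^sup>+ y. G (\<Sum>p\<in>B. (cmod (y p))\<^sup>2) \<partial>PiM B (\<lambda>_. lborel::complex measure))
     = ennreal (pi ^ card B / fact (card B - 1)) * (\<integral>\<^sup>+ u. G u * ennreal (u ^ (card B - 1)) * indicator {0..} u \<partial>lborel)"
  using assms
proof (induction B arbitrary: G rule: finite_ne_induct)
  case (singleton a)
  interpret product_sigma_finite "\<lambda>_::'i. lborel :: complex measure" by (rule psf_lborel)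
  note [measurable] = singleton
  have "(\<integral>\<^sup>+ y. G (\<Sum>p\<in>{a}. (cmod (y p))\<^sup>2) \<partial>PiM {a} (\<lambda>_. lborel::complex measure))
      = (\<integral>\<^sup>+ z. G ((cmod z)\<^sup>2) \<partial>(lborel::complex measure))"
  proof -
    have m: "(\<lambda>z. G ((cmod z)\<^sup>2)) \<in> borel_measurable ((\<lambda>_::'i. lborel :: complex measure) a)" by measurable
    show ?thesis using product_nn_integral_singleton[OF m] by simp
  qed
  also have "\<dots> = ennreal pi * (\<integral>\<^sup>+ u. G u * indicator {0..} u \<partial>lborel)"
    by (rule radial2) (use singleton in simp)
  finally show ?case by simp
next
  case (insert a B G)
  interpret product_sigma_finite "\<lambda>_::'i. lborel :: complex measure" by (rule psf_lborel)
  interpret PB: sigma_finite_measure "PiM B (\<lambda>_. lborel :: complex measure)"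
    using insert(1) by (rule sigma_finite)
  interpret pair_sigma_finite "PiM B (\<lambda>_. lborel :: complex measure)" "lborel :: real measure" ..
  note Gm[measurable] = insert.prems
  define k where "k = card B"
  have k1: "k \<ge> 1" using insert(1,2) k_def by (simp add: Suc_leI card_gt_0_iff)
  have ck: "card (insert a B) = Suc k" using insert k_def by simp
  define s where "s = (\<lambda>y::'i \<Rightarrow> complex. \<Sum>p\<in>B. (cmod (y p))\<^sup>2)"
  have sm[measurable]: "s \<in> borel_measurable (PiM B (\<lambda>_. lborel))" unfolding s_def by measurable
  have "(\<integral>\<^sup>+ y. G (\<Sum>p\<in>insert a B. (cmod (y p))\<^sup>2) \<partial>PiM (insert a B) (\<lambda>_. lborel::complex measure))
      = (\<integral>\<^sup>+ y. \<integral>\<^sup>+ z. G (\<Sum>p\<in>insert a B. (cmod ((y(a := z)) p))\<^sup>2) \<partial>lborel \<partial>PiM B (\<lambda>_. lborel))"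
    by (rule product_nn_integral_insert) (use insert in auto)
  also have "\<dots> = (\<integral>\<^sup>+ y. \<integral>\<^sup>+ z. G ((cmod z)\<^sup>2 + s y) \<partial>lborel \<partial>PiM B (\<lambda>_. lborel))"
  proof (intro nn_integral_cong)
    fix y z
    have "(\<Sum>p\<in>insert a B. (cmod ((y(a := z)) p))\<^sup>2) = (cmod z)\<^sup>2 + (\<Sum>p\<in>B. (cmod ((y(a := z)) p))\<^sup>2)"
      using insert by simp
    also have "(\<Sum>p\<in>B. (cmod ((y(a := z)) p))\<^sup>2) = s y"
      unfolding s_def using insert(3) by (intro sum.cong) auto
    finally show "G (\<Sum>p\<in>insert a B. (cmod ((y(a := z)) p))\<^sup>2) = G ((cmod z)\<^sup>2 + s y)" by simp
  qed
  also have "\<dots> = (\<integral>\<^sup>+ y. ennreal pi * (\<integral>\<^sup>+ v. G (v + s y) * indicator {0..} v \<partial>lborel) \<partial>PiM B (\<lambda>_. lborel))"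
    by (intro nn_integral_cong radial2[of "\<lambda>x. G (x + _)", simplified]) measurable
  also have "\<dots> = ennreal pi * (\<integral>\<^sup>+ y. \<integral>\<^sup>+ v. G (v + s y) * indicator {0..} v \<partial>lborel \<partial>PiM B (\<lambda>_. lborel))"
    by (rule nn_integral_cmult) measurable
  also have "(\<integral>\<^sup>+ y. \<integral>\<^sup>+ v. G (v + s y) * indicator {0..} v \<partial>lborel \<partial>PiM B (\<lambda>_. lborel))
      = (\<integral>\<^sup>+ v. \<integral>\<^sup>+ y. G (v + s y) * indicator {0..} v \<partial>PiM B (\<lambda>_. lborel) \<partial>lborel)"
    by (rule Fubini'[symmetric]) measurable
  also have "\<dots> = (\<integral>\<^sup>+ v. indicator {0..} v * (\<integral>\<^sup>+ y. G (v + s y) \<partial>PiM B (\<lambda>_. lborel)) \<partial>lborel)"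
    by (intro nn_integral_cong) (subst nn_integral_cmult[symmetric], measurable, simp add: ac_simps)
  also have "\<dots> = (\<integral>\<^sup>+ v. indicator {0..} v * (ennreal (pi ^ k / fact (k - 1)) *
                  (\<integral>\<^sup>+ u. G (v + u) * ennreal (u ^ (k - 1)) * indicator {0..} u \<partial>lborel)) \<partial>lborel)"
  proof (intro nn_integral_cong arg_cong2[where f="(*)"] refl)
    fix v :: real
    have m: "(\<lambda>u. G (v + u)) \<in> borel_measurable borel" by measurable
    show "(\<integral>\<^sup>+ y. G (v + s y) \<partial>PiM B (\<lambda>_. lborel)) = ennreal (pi ^ k / fact (k - 1)) *
                  (\<integral>\<^sup>+ u. G (v + u) * ennreal (u ^ (k - 1)) * indicator {0..} u \<partial>lborel)"
      using insert.IH[OF m] unfolding s_def k_def by simp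
  qed
  also have "\<dots> = ennreal (pi ^ k / fact (k - 1)) * (\<integral>\<^sup>+ v. indicator {0..} v *
                  (\<integral>\<^sup>+ u. G (v + u) * ennreal (u ^ (k - 1)) * indicator {0..} u \<partial>lborel) \<partial>lborel)"
    by (subst nn_integral_cmult[symmetric]) (measurable, simp add: ac_simps)
  also have "\<dots> = ennreal (pi ^ k / fact (k - 1)) * (ennreal (1 / real k) * (\<integral>\<^sup>+ w. G w * ennreal (w ^ k) * indicator {0..} w \<partial>lborel))"
    by (simp only: conv_lemma[OF Gm k1])
  also have "ennreal pi * (ennreal (pi ^ k / fact (k - 1)) * (ennreal (1 / real k) * (\<integral>\<^sup>+ w. G w * ennreal (w ^ k) * indicator {0..} w \<partial>lborel)))
     = ennreal (pi ^ Suc k / fact k) * (\<integral>\<^sup>+ w. G w * ennreal (w ^ k) * indicator {0..} w \<partial>lborel)"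
  proof -
    have e1: "pi * (pi ^ k / fact (k - 1) * (1 / real k)) = pi ^ Suc k / fact k"
      using k1 by (cases k) (auto simp: field_simps)
    have e2: "ennreal pi * (ennreal (pi ^ k / fact (k - 1)) * ennreal (1 / real k))
        = ennreal (pi * (pi ^ k / fact (k - 1) * (1 / real k)))"
      by (simp only: ennreal_mult[symmetric] divide_nonneg_nonneg zero_le_power pi_ge_zero fact_ge_zero of_nat_0_le_iff
          mult_nonneg_nonneg zero_le_one)
    show ?thesis by (subst e1[symmetric], subst e2[symmetric]) (simp only: mult.assoc)
  qed
  finally show ?case unfolding ck by simp
qed

lemma sum_times_singleton: "(\<Sum>p\<in>I \<times> {j}. g p) = (\<Sum>k\<in>I. g (k, j))"
proof -
  have "I \<times> {j} = (\<lambda>k. (k, j)) ` I" by auto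
  then show ?thesis by (simp add: sum.reindex inj_on_def)
qed

lemma col_product:
  fixes I J :: "nat set" and hi :: "nat \<Rightarrow> real \<Rightarrow> ennreal"
  assumes I: "finite I" and J: "finite J" and hm: "\<And>i. hi i \<in> borel_measurable borel"
  shows "(\<integral>\<^sup>+ Y. (\<Prod>i\<in>J. hi i (\<Sum>k\<in>I. (cmod (Y (k,i)))\<^sup>2)) \<partial>PiM (I \<times> J) (\<lambda>_. lborel::complex measure))
       = (\<Prod>i\<in>J. \<integral>\<^sup>+ Y. hi i (\<Sum>p\<in>I \<times> {i}. (cmod (Y p))\<^sup>2) \<partial>PiM (I \<times> {i}) (\<lambda>_. lborel::complex measure))"
  using J
proof (induction J rule: finite_induct)
  case empty
  show ?case by (simp add: PiM_empty)
next
  case (insert j J)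
  interpret product_sigma_finite "\<lambda>_::nat\<times>nat. lborel :: complex measure" by (rule psf_lborel)
  note [measurable] = hm
  have un: "I \<times> insert j J = (I \<times> {j}) \<union> (I \<times> J)" by auto
  have dis: "(I \<times> {j}) \<inter> (I \<times> J) = {}" using insert by auto
  define A where "A = (\<lambda>x::nat\<times>nat\<Rightarrow>complex. hi j (\<Sum>k\<in>I. (cmod (x (k,j)))\<^sup>2))"
  define B where "B = (\<lambda>y::nat\<times>nat\<Rightarrow>complex. (\<Prod>i\<in>J. hi i (\<Sum>k\<in>I. (cmod (y (k,i)))\<^sup>2)))"
  have Am[measurable]: "A \<in> borel_measurable (PiM (I \<times> {j}) (\<lambda>_. lborel))"
    unfolding A_def by measurable
  have Bm[measurable]: "B \<in> borel_measurable (PiM (I \<times> J) (\<lambda>_. lborel))"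
    unfolding B_def by measurable
  have "(\<integral>\<^sup>+ Y. (\<Prod>i\<in>insert j J. hi i (\<Sum>k\<in>I. (cmod (Y (k,i)))\<^sup>2)) \<partial>PiM (I \<times> insert j J) (\<lambda>_. lborel::complex measure))
      = (\<integral>\<^sup>+ Y. (\<Prod>i\<in>insert j J. hi i (\<Sum>k\<in>I. (cmod (Y (k,i)))\<^sup>2)) \<partial>PiM ((I \<times> {j}) \<union> (I \<times> J)) (\<lambda>_. lborel::complex measure))"
    by (simp only: un)
  also have "\<dots> = (\<integral>\<^sup>+ x. \<integral>\<^sup>+ y. (\<Prod>i\<in>insert j J. hi i (\<Sum>k\<in>I. (cmod (merge (I \<times> {j}) (I \<times> J) (x, y) (k,i)))\<^sup>2))
        \<partial>PiM (I \<times> J) (\<lambda>_. lborel) \<partial>PiM (I \<times> {j}) (\<lambda>_. lborel))"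
    by (rule product_nn_integral_fold) (use dis I insert in \<open>auto\<close>)
  also have "\<dots> = (\<integral>\<^sup>+ x. \<integral>\<^sup>+ y. A x * B y \<partial>PiM (I \<times> J) (\<lambda>_. lborel) \<partial>PiM (I \<times> {j}) (\<lambda>_. lborel))"
  proof (intro nn_integral_cong)
    fix x y :: "nat \<times> nat \<Rightarrow> complex"
    have "(\<Prod>i\<in>insert j J. hi i (\<Sum>k\<in>I. (cmod (merge (I \<times> {j}) (I \<times> J) (x, y) (k,i)))\<^sup>2))
        = hi j (\<Sum>k\<in>I. (cmod (merge (I \<times> {j}) (I \<times> J) (x, y) (k,j)))\<^sup>2) *
          (\<Prod>i\<in>J. hi i (\<Sum>k\<in>I. (cmod (merge (I \<times> {j}) (I \<times> J) (x, y) (k,i)))\<^sup>2))"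
      using insert by simp
    also have "hi j (\<Sum>k\<in>I. (cmod (merge (I \<times> {j}) (I \<times> J) (x, y) (k,j)))\<^sup>2) = A x"
      unfolding A_def using dis by (intro arg_cong[where f="hi j"] sum.cong) (auto simp: merge_apply)
    also have "(\<Prod>i\<in>J. hi i (\<Sum>k\<in>I. (cmod (merge (I \<times> {j}) (I \<times> J) (x, y) (k,i)))\<^sup>2)) = B y"
      unfolding B_def using dis insert(2)
      by (intro prod.cong refl arg_cong[where f="hi _"] sum.cong) (auto simp: merge_apply)
    finally show "(\<Prod>i\<in>insert j J. hi i (\<Sum>k\<in>I. (cmod (merge (I \<times> {j}) (I \<times> J) (x, y) (k,i)))\<^sup>2)) = A x * B y" .
  qed
  also have "\<dots> = (\<integral>\<^sup>+ x. A x * (\<integral>\<^sup>+ y. B y \<partial>PiM (I \<times> J) (\<lambda>_. lborel)) \<partial>PiM (I \<times> {j}) (\<lambda>_. lborel))"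
    by (intro nn_integral_cong nn_integral_cmult) measurable
  also have "\<dots> = (\<integral>\<^sup>+ x. A x \<partial>PiM (I \<times> {j}) (\<lambda>_. lborel)) * (\<integral>\<^sup>+ y. B y \<partial>PiM (I \<times> J) (\<lambda>_. lborel))"
    by (rule nn_integral_multc) measurable
  also have "(\<integral>\<^sup>+ y. B y \<partial>PiM (I \<times> J) (\<lambda>_. lborel)) = (\<Prod>i\<in>J. \<integral>\<^sup>+ Y. hi i (\<Sum>p\<in>I \<times> {i}. (cmod (Y p))\<^sup>2) \<partial>PiM (I \<times> {i}) (\<lambda>_. lborel::complex measure))"
    unfolding B_def by (rule insert.IH)
  also have "(\<integral>\<^sup>+ x. A x \<partial>PiM (I \<times> {j}) (\<lambda>_. lborel)) = (\<integral>\<^sup>+ Y. hi j (\<Sum>p\<in>I \<times> {j}. (cmod (Y p))\<^sup>2) \<partial>PiM (I \<times> {j}) (\<lambda>_. lborel::complex measure))"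
    unfolding A_def by (intro nn_integral_cong arg_cong[where f="hi j"]) (simp add: sum_times_singleton)
  finally show ?case using insert by simp
qed

lemma PiM_density:
  fixes f :: "'i \<Rightarrow> 'a::euclidean_space \<Rightarrow> real"
  assumes K: "finite K" and fm[measurable]: "\<And>k. f k \<in> borel_measurable borel" and f0: "\<And>k x. f k x \<ge> 0"
  shows "PiM K (\<lambda>k. density lborel (\<lambda>x. ennreal (f k x)))
         = density (PiM K (\<lambda>_. lborel)) (\<lambda>Y. \<Prod>k\<in>K. ennreal (f k (Y k)))"
proof -
  define M where "M = (\<lambda>k. density lborel (\<lambda>x. ennreal (f k x)))"
  have sf: "sigma_finite_measure (M k)" for k
    unfolding M_def by (subst sigma_finite_measure.sigma_finite_iff_density_finite[OF sigma_finite_lborel]) auto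
  interpret product_sigma_finite M by (simp add: product_sigma_finite_def sf)
  interpret L: product_sigma_finite "\<lambda>_::'i. lborel :: 'a measure"
    by (simp add: product_sigma_finite_def lborel.sigma_finite_measure_axioms)
  have setsM: "sets (M k) = sets lborel" for k unfolding M_def by simp
  have "density (PiM K (\<lambda>_. lborel)) (\<lambda>Y. \<Prod>k\<in>K. ennreal (f k (Y k))) = PiM K M"
  proof (rule PiM_eqI[OF K])
    show "sets (density (PiM K (\<lambda>_. lborel)) (\<lambda>Y. \<Prod>k\<in>K. ennreal (f k (Y k)))) = sets (PiM K M)"
      by (simp add: setsM cong: sets_PiM_cong)
  next
    fix A assume A: "\<And>i. i \<in> K \<Longrightarrow> A i \<in> sets (M i)"
    have Am: "A i \<in> sets lborel" if "i \<in> K" for i using A[OF that] setsM by simp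
    have PE: "PiE K A \<in> sets (PiM K (\<lambda>_. lborel :: 'a measure))"
      using Am by (intro sets_PiM_I_finite K) auto
    have "emeasure (density (PiM K (\<lambda>_. lborel)) (\<lambda>Y. \<Prod>k\<in>K. ennreal (f k (Y k)))) (PiE K A)
        = (\<integral>\<^sup>+ Y. (\<Prod>k\<in>K. ennreal (f k (Y k))) * indicator (PiE K A) Y \<partial>PiM K (\<lambda>_. lborel))"
    proof (rule emeasure_density[OF _ PE])
      show "(\<lambda>Y. \<Prod>k\<in>K. ennreal (f k (Y k))) \<in> borel_measurable (PiM K (\<lambda>_. lborel))"
      proof (rule borel_measurable_prod_ennreal)
        fix k assume k: "k \<in> K"
        show "(\<lambda>Y. ennreal (f k (Y k))) \<in> borel_measurable (PiM K (\<lambda>_. lborel))"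
          by (rule measurable_compose[OF measurable_component_singleton[OF k]]) measurable
      qed
    qed
    also have "\<dots> = (\<integral>\<^sup>+ Y. (\<Prod>k\<in>K. ennreal (f k (Y k)) * indicator (A k) (Y k)) \<partial>PiM K (\<lambda>_. lborel))"
    proof (rule nn_integral_cong)
      fix Y assume "Y \<in> space (PiM K (\<lambda>_. lborel :: 'a measure))"
      then have Ye: "Y \<in> extensional K" by (auto simp: space_PiM PiE_def)
      have "indicator (PiE K A) Y = (\<Prod>k\<in>K. indicator (A k) (Y k) :: ennreal)"
        using Ye K by (auto simp: indicator_def PiE_def Pi_def prod_zero_iff)
      then show "(\<Prod>k\<in>K. ennreal (f k (Y k))) * indicator (PiE K A) Y = (\<Prod>k\<in>K. ennreal (f k (Y k)) * indicator (A k) (Y k))"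
        by (simp add: prod.distrib)
    qed
    also have "\<dots> = (\<Prod>k\<in>K. \<integral>\<^sup>+ x. ennreal (f k x) * indicator (A k) x \<partial>lborel)"
      using Am by (intro L.product_nn_integral_prod K) (auto intro: borel_measurable_times_ennreal)
    also have "\<dots> = (\<Prod>k\<in>K. emeasure (M k) (A k))"
      unfolding M_def using Am by (intro prod.cong refl) (simp add: emeasure_density)
    finally show "emeasure (density (PiM K (\<lambda>_. lborel)) (\<lambda>Y. \<Prod>k\<in>K. ennreal (f k (Y k)))) (PiE K A)
        = (\<Prod>k\<in>K. emeasure (M k) (A k))" .
  qed
  then show ?thesis unfolding M_def by simp
qed

lemma col_dens:
  fixes y :: "nat \<Rightarrow> complex"
  assumes s: "s > 0" and I: "finite I"
  shows "(\<Prod>k\<in>I. ennreal (exp (- (cmod (y k))\<^sup>2 / s) / (pi * s)))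
       = ennreal (exp (- (\<Sum>k\<in>I. (cmod (y k))\<^sup>2) / s) / (pi * s) ^ card I)"
proof -
  have "(\<Prod>k\<in>I. ennreal (exp (- (cmod (y k))\<^sup>2 / s) / (pi * s)))
      = ennreal (\<Prod>k\<in>I. exp (- (cmod (y k))\<^sup>2 / s) / (pi * s))"
    using s by (intro prod_ennreal) auto
  also have "(\<Prod>k\<in>I. exp (- (cmod (y k))\<^sup>2 / s) / (pi * s)) = (\<Prod>k\<in>I. exp (- (cmod (y k))\<^sup>2 / s)) / (pi * s) ^ card I"
    by (simp add: prod_dividef)
  also have "(\<Prod>k\<in>I. exp (- (cmod (y k))\<^sup>2 / s)) = exp (\<Sum>k\<in>I. - (cmod (y k))\<^sup>2 / s)"
    using I by (simp add: exp_sum)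
  also have "(\<Sum>k\<in>I. - (cmod (y k))\<^sup>2 / s) = - (\<Sum>k\<in>I. (cmod (y k))\<^sup>2) / s"
    by (simp add: sum_negf sum_divide_distrib)
  finally show ?thesis .
qed

lemma key:
  fixes f :: "nat \<Rightarrow> (nat \<Rightarrow> real) \<Rightarrow> complex mat"
    and g :: "(nat \<times> nat \<Rightarrow> complex) \<times> (nat \<Rightarrow> real) \<Rightarrow> nat"
  assumes n1: "n \<ge> 1" and \<rho>: "\<rho> > 0" and l: "l \<in> {..<m} \<rightarrow>\<^sub>E {0..}"
    and f_dim: "\<And>j. j \<in> {1..M} \<Longrightarrow> f j l \<in> carrier_mat n m"
    and f_pow: "\<And>j. j \<in> {1..M} \<Longrightarrow> (\<Sum>i<m. \<Sum>k<n. (cmod (f j l $$ (k, i)))\<^sup>2) \<le> real n * \<rho>"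
    and g_meas: "g \<in> measurable (PiM ({..<n} \<times> {..<m}) (\<lambda>_. borel) \<Otimes>\<^sub>M PiM {..<m} (\<lambda>_. borel))
                   (count_space UNIV)"
  shows "(\<Sum>j\<in>{1..M}. emeasure (aux_chan n m (f j l) l)
            {Y \<in> space (aux_chan n m (f j l) l). g (Y, l) = j})
         \<le> ennreal (c_rt_factor n ^ m * (\<Prod>i<m. 1 + \<rho> * l i))"
proof -
  define I where "I = {..<n}"
  define J where "J = {..<m}"
  define K where "K = I \<times> J"
  have fin: "finite I" "finite J" "finite K" unfolding I_def J_def K_def by auto
  have cI: "card I = n" unfolding I_def by simp
  define S where "S = (\<lambda>i. 1 + \<rho> * l i)"
  define s where "s = (\<lambda>j i. max 1 (1 + col_pow n (f j l) i * l i))"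
  have l0: "0 \<le> l i" if "i \<in> J" for i using l that unfolding J_def by auto
  have S1: "S i \<ge> 1" if "i \<in> J" for i unfolding S_def using l0[OF that] \<rho> by simp
  have s1: "s j i \<ge> 1" for j i unfolding s_def by simp
  have sS: "s j i \<le> S i" if "j \<in> {1..M}" "i \<in> J" for j i
  proof -
    have "(\<Sum>k<n. (cmod (f j l $$ (k, i)))\<^sup>2) \<le> (\<Sum>i'<m. \<Sum>k<n. (cmod (f j l $$ (k, i')))\<^sup>2)"
      using that(2) unfolding J_def by (intro member_le_sum) (auto intro: sum_nonneg)
    also have "\<dots> \<le> real n * \<rho>" using f_pow[OF that(1)] .
    finally have "col_pow n (f j l) i \<le> \<rho>"
      unfolding col_pow_def using n1 by (simp add: divide_le_eq mult.commute)
    then have "col_pow n (f j l) i * l i \<le> \<rho> * l i" using l0[OF that(2)] by (simp add: mult_right_mono)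
    moreover have "1 \<le> S i" using S1[OF that(2)] .
    ultimately show ?thesis unfolding s_def S_def by simp
  qed
  define \<phi> where "\<phi> = (\<lambda>(s::real) (z::complex). exp (- (cmod z)\<^sup>2 / s) / (pi * s))"
  have \<phi>m[measurable]: "\<phi> s \<in> borel_measurable borel" for s unfolding \<phi>_def by measurable
  have \<phi>0: "\<phi> (s j i) z \<ge> 0" for j i z unfolding \<phi>_def using s1[of j i] by auto
  define dens where "dens = (\<lambda>j (Y::nat\<times>nat\<Rightarrow>complex). \<Prod>p\<in>K. ennreal (\<phi> (s j (snd p)) (Y p)))"
  have chan: "aux_chan n m (f j l) l = density (PiM K (\<lambda>_. lborel)) (dens j)" if j: "j \<in> {1..M}" for j
  proof -
    have "aux_chan n m (f j l) l = PiM K (\<lambda>p. density lborel (\<lambda>z. ennreal (\<phi> (s j (snd p)) z)))"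
      unfolding aux_chan_def K_def I_def J_def
    proof (rule PiM_cong[OF refl])
      fix p assume p: "p \<in> {..<n} \<times> {..<m}"
      obtain k i where [simp]: "p = (k, i)" by (cases p)
      have cp0: "col_pow n (f j l) i \<ge> 0" unfolding col_pow_def by (intro divide_nonneg_nonneg sum_nonneg) auto
      have "1 + col_pow n (f j l) i * l i \<ge> 1"
        using l0[of i] p cp0 unfolding J_def by auto
      then have "s j i = 1 + col_pow n (f j l) i * l i" unfolding s_def by simp
      then show "(case p of (k, i) \<Rightarrow> cgauss (1 + col_pow n (f j l) i * l i)) =
            density lborel (\<lambda>z. ennreal (\<phi> (s j (snd p)) z))"
        unfolding cgauss_def \<phi>_def by simp
    qed
    also have "\<dots> = density (PiM K (\<lambda>_. lborel)) (dens j)"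
      unfolding dens_def by (rule PiM_density[OF fin(3)]) (auto simp: \<phi>0)
    finally show ?thesis .
  qed
  define A where "A = (\<lambda>j. {Y \<in> space (PiM K (\<lambda>_. borel :: complex measure)). g (Y, l) = j})"
  have lsp: "l \<in> space (PiM J (\<lambda>_. borel :: real measure))" using l unfolding J_def by (auto simp: space_PiM)
  have setsK: "sets (PiM K (\<lambda>_. lborel :: complex measure)) = sets (PiM K (\<lambda>_. borel))"
    by (rule sets_PiM_cong) auto
  have spK: "space (PiM K (\<lambda>_. lborel :: complex measure)) = space (PiM K (\<lambda>_. borel))"
    by (simp add: space_PiM)
  have Am: "A j \<in> sets (PiM K (\<lambda>_. lborel :: complex measure))" for j
  proof -
    have gm: "(\<lambda>Y. g (Y, l)) \<in> measurable (PiM K (\<lambda>_. borel :: complex measure)) (count_space UNIV)"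
      using measurable_Pair1[OF g_meas lsp[unfolded J_def]] unfolding K_def I_def J_def .
    have "(\<lambda>Y. g (Y, l)) -` {j} \<inter> space (PiM K (\<lambda>_. borel :: complex measure)) \<in> sets (PiM K (\<lambda>_. borel))"
      by (rule measurable_sets[OF gm]) simp
    moreover have "(\<lambda>Y. g (Y, l)) -` {j} \<inter> space (PiM K (\<lambda>_. borel :: complex measure)) = A j"
      unfolding A_def by auto
    ultimately show ?thesis using setsK by simp
  qed
  define H where "H = (\<lambda>Y::nat\<times>nat\<Rightarrow>complex. \<Prod>i\<in>J. ennreal (hr n (S i) (\<Sum>k\<in>I. (cmod (Y (k,i)))\<^sup>2)))"
  have Hm[measurable]: "H \<in> borel_measurable (PiM K (\<lambda>_. lborel))"
    unfolding H_def K_def by measurable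
  have densH: "dens j Y \<le> H Y" if j: "j \<in> {1..M}" for j Y
  proof -
    have "dens j Y = (\<Prod>i\<in>J. \<Prod>k\<in>I. ennreal (\<phi> (s j i) (Y (k,i))))"
    proof -
      have "(\<Prod>i\<in>J. \<Prod>k\<in>I. ennreal (\<phi> (s j i) (Y (k,i)))) = (\<Prod>k\<in>I. \<Prod>i\<in>J. ennreal (\<phi> (s j i) (Y (k,i))))"
        by (rule prod.swap)
      also have "\<dots> = (\<Prod>(k,i)\<in>I \<times> J. ennreal (\<phi> (s j i) (Y (k,i))))"
        by (rule prod.cartesian_product)
      also have "\<dots> = dens j Y"
        unfolding dens_def K_def by (intro prod.cong) auto
      finally show ?thesis by simp
    qed
    also have "\<dots> \<le> H Y" unfolding H_def
    proof (rule prod_mono_ennreal)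
      fix i assume i: "i \<in> J"
      have "(\<Prod>k\<in>I. ennreal (\<phi> (s j i) (Y (k,i)))) = ennreal (exp (- (\<Sum>k\<in>I. (cmod (Y (k,i)))\<^sup>2) / s j i) / (pi * s j i) ^ n)"
        unfolding \<phi>_def using col_dens[of "s j i" I "\<lambda>k. Y (k,i)"] s1[of j i] fin cI by simp
      also have "\<dots> \<le> ennreal (hr n (S i) (\<Sum>k\<in>I. (cmod (Y (k,i)))\<^sup>2))"
        by (intro ennreal_leI dom[OF n1 s1 sS[OF j i]]) (auto intro: sum_nonneg)
      finally show "(\<Prod>k\<in>I. ennreal (\<phi> (s j i) (Y (k,i)))) \<le> ennreal (hr n (S i) (\<Sum>k\<in>I. (cmod (Y (k,i)))\<^sup>2))" .
    qed
    finally show ?thesis .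
  qed
  have step1: "emeasure (aux_chan n m (f j l) l) {Y \<in> space (aux_chan n m (f j l) l). g (Y, l) = j}
      \<le> (\<integral>\<^sup>+ Y. H Y * indicator (A j) Y \<partial>PiM K (\<lambda>_. lborel))" if j: "j \<in> {1..M}" for j
  proof -
    have "{Y \<in> space (aux_chan n m (f j l) l). g (Y, l) = j} = A j"
      unfolding chan[OF j] A_def by (simp add: spK)
    then have "emeasure (aux_chan n m (f j l) l) {Y \<in> space (aux_chan n m (f j l) l). g (Y, l) = j}
        = (\<integral>\<^sup>+ Y. dens j Y * indicator (A j) Y \<partial>PiM K (\<lambda>_. lborel))"
      unfolding chan[OF j] using Am by (simp add: emeasure_density dens_def)
    also have "\<dots> \<le> (\<integral>\<^sup>+ Y. H Y * indicator (A j) Y \<partial>PiM K (\<lambda>_. lborel))"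
      by (intro nn_integral_mono mult_right_mono densH[OF j]) auto
    finally show ?thesis .
  qed
  have "(\<Sum>j\<in>{1..M}. emeasure (aux_chan n m (f j l) l) {Y \<in> space (aux_chan n m (f j l) l). g (Y, l) = j})
      \<le> (\<Sum>j\<in>{1..M}. \<integral>\<^sup>+ Y. H Y * indicator (A j) Y \<partial>PiM K (\<lambda>_. lborel))"
    by (intro sum_mono step1)
  also have "\<dots> = (\<integral>\<^sup>+ Y. (\<Sum>j\<in>{1..M}. H Y * indicator (A j) Y) \<partial>PiM K (\<lambda>_. lborel))"
    by (intro nn_integral_sum[symmetric] borel_measurable_times_ennreal Hm borel_measurable_indicator Am)
  also have "\<dots> \<le> (\<integral>\<^sup>+ Y. H Y \<partial>PiM K (\<lambda>_. lborel))"
  proof (intro nn_integral_mono)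
    fix Y
    have "(\<Sum>j\<in>{1..M}. H Y * indicator (A j) Y) = H Y * (\<Sum>j\<in>{1..M}. indicator (A j) Y)"
      by (simp add: sum_distrib_left)
    also have "(\<Sum>j\<in>{1..M}. indicator (A j) Y :: ennreal) = (\<Sum>j\<in>{1..M}. if j = g (Y, l) then indicator (A j) Y else 0)"
      unfolding A_def by (intro sum.cong) (auto split: split_indicator)
    also have "\<dots> \<le> 1" by (simp add: sum.delta' indicator_def)
    finally show "(\<Sum>j\<in>{1..M}. H Y * indicator (A j) Y) \<le> H Y"
      by (metis mult.right_neutral mult_left_mono zero_le)
  qed
  also have "(\<integral>\<^sup>+ Y. H Y \<partial>PiM K (\<lambda>_. lborel)) = (\<Prod>i\<in>J. \<integral>\<^sup>+ Y. ennreal (hr n (S i) (\<Sum>p\<in>I \<times> {i}. (cmod (Y p))\<^sup>2)) \<partial>PiM (I \<times> {i}) (\<lambda>_. lborel::complex measure))"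
    unfolding H_def K_def by (rule col_product[OF fin(1,2)]) measurable
  also have "\<dots> \<le> (\<Prod>i\<in>J. ennreal (c_rt_factor n * S i))"
  proof (rule prod_mono_ennreal)
    fix i assume i: "i \<in> J"
    have ne: "I \<times> {i} \<noteq> {}" using n1 unfolding I_def by (auto simp: lessThan_empty_iff)
    have cc: "card (I \<times> {i}) = n" using cI fin by (simp add: card_cartesian_product)
    have "(\<integral>\<^sup>+ Y. ennreal (hr n (S i) (\<Sum>p\<in>I \<times> {i}. (cmod (Y p))\<^sup>2)) \<partial>PiM (I \<times> {i}) (\<lambda>_. lborel::complex measure))
        = ennreal (pi ^ n / fact (n - 1)) * (\<integral>\<^sup>+ u. ennreal (hr n (S i) u) * ennreal (u ^ (n - 1)) * indicator {0..} u \<partial>lborel)"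
      using radialN[of "I \<times> {i}" "\<lambda>u. ennreal (hr n (S i) u)"] fin ne cc by simp
    also have "\<dots> \<le> ennreal (c_rt_factor n * S i)" by (rule col_int[OF n1 S1[OF i]])
    finally show "(\<integral>\<^sup>+ Y. ennreal (hr n (S i) (\<Sum>p\<in>I \<times> {i}. (cmod (Y p))\<^sup>2)) \<partial>PiM (I \<times> {i}) (\<lambda>_. lborel::complex measure)) \<le> ennreal (c_rt_factor n * S i)" .
  qed
  also have "(\<Prod>i\<in>J. ennreal (c_rt_factor n * S i)) = ennreal (c_rt_factor n ^ m * (\<Prod>i<m. 1 + \<rho> * l i))"
  proof -
    have "(\<Prod>i\<in>J. ennreal (c_rt_factor n * S i)) = ennreal (\<Prod>i\<in>J. c_rt_factor n * S i)"
    proof (rule prod_ennreal)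
      fix i assume "i \<in> J"
      then have "S i \<ge> 1" by (rule S1)
      then show "0 \<le> c_rt_factor n * S i" using c_rt_nonneg[of n] by simp
    qed
    also have "(\<Prod>i\<in>J. c_rt_factor n * S i) = c_rt_factor n ^ m * (\<Prod>i<m. 1 + \<rho> * l i)"
      unfolding J_def S_def by (simp add: prod.distrib)
    finally show ?thesis .
  qed
  finally show ?thesis .
qed

lemma prod_mset_cmult:
  "(\<Prod>x\<in>#X. c * f x) = c ^ size X * (\<Prod>x\<in>#X. f x)" for c :: "'a::comm_monoid_mult"
  by (induction X) (auto simp: ac_simps)

lemma adj_carrier: "H \<in> carrier_mat t r \<Longrightarrow> mat_adjoint H \<in> carrier_mat r t"
  unfolding mat_adjoint_def by auto

lemma adj_index: "H \<in> carrier_mat t r \<Longrightarrow> k < r \<Longrightarrow> j < t \<Longrightarrow> mat_adjoint H $$ (k,j) = cnj (H $$ (j,k))"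
  unfolding mat_adjoint_def by (auto simp: mat_of_rows_index)

lemma HH_index:
  assumes "H \<in> carrier_mat t r" "i < t" "j < t"
  shows "(H * mat_adjoint H) $$ (i,j) = (\<Sum>k<r. H $$ (i,k) * cnj (H $$ (j,k)))"
  using assms adj_carrier[OF assms(1)]
  by (auto simp: scalar_prod_def adj_index atLeast0LessThan intro!: sum.cong)

lemma HH_root:
  assumes H: "H \<in> carrier_mat t r" and root: "poly (char_poly (H * mat_adjoint H)) \<mu> = 0"
  shows "\<mu> = complex_of_real (Re \<mu>) \<and> Re \<mu> \<ge> 0"
proof -
  define A where "A = H * mat_adjoint H"
  have A: "A \<in> carrier_mat t t" unfolding A_def using H adj_carrier[OF H] by auto
  have "eigenvalue A \<mu>" using root eigenvalue_root_char_poly[OF A] unfolding A_def by simp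
  then obtain v where v: "v \<in> carrier_vec t" "v \<noteq> 0\<^sub>v t" "A *\<^sub>v v = \<mu> \<cdot>\<^sub>v v"
    unfolding eigenvalue_def eigenvector_def using A by auto
  have Av: "(\<Sum>j<t. A $$ (i,j) * v $ j) = \<mu> * v $ i" if "i < t" for i
  proof -
    have "(A *\<^sub>v v) $ i = \<mu> * v $ i" using v(3) that v(1) by simp
    then show ?thesis using that A v(1) by (simp add: scalar_prod_def atLeast0LessThan)
  qed
  define w where "w = (\<lambda>k. \<Sum>j<t. cnj (H $$ (j,k)) * v $ j)"
  define N where "N = (\<Sum>i<t. (cmod (v $ i))\<^sup>2)"
  have "(\<Sum>i<t. cnj (v $ i) * (\<Sum>j<t. A $$ (i,j) * v $ j)) = \<mu> * (\<Sum>i<t. cnj (v $ i) * v $ i)"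
  proof -
    have "(\<Sum>i<t. cnj (v $ i) * (\<Sum>j<t. A $$ (i,j) * v $ j)) = (\<Sum>i<t. \<mu> * (cnj (v $ i) * v $ i))"
      by (intro sum.cong refl) (simp add: Av)
    then show ?thesis by (simp add: sum_distrib_left)
  qed
  moreover have "(\<Sum>i<t. cnj (v $ i) * (\<Sum>j<t. A $$ (i,j) * v $ j)) = (\<Sum>k<r. cnj (w k) * w k)"
  proof -
    have "(\<Sum>i<t. cnj (v $ i) * (\<Sum>j<t. A $$ (i,j) * v $ j))
        = (\<Sum>i<t. \<Sum>j<t. \<Sum>k<r. cnj (v $ i) * H $$ (i,k) * cnj (H $$ (j,k)) * v $ j)"
      unfolding A_def using H
      by (simp add: HH_index sum_distrib_left sum_distrib_right ac_simps)
    also have "\<dots> = (\<Sum>k<r. \<Sum>i<t. \<Sum>j<t. cnj (v $ i) * H $$ (i,k) * cnj (H $$ (j,k)) * v $ j)"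
    proof -
      have "(\<Sum>i<t. \<Sum>j<t. \<Sum>k<r. cnj (v $ i) * H $$ (i,k) * cnj (H $$ (j,k)) * v $ j)
          = (\<Sum>i<t. \<Sum>k<r. \<Sum>j<t. cnj (v $ i) * H $$ (i,k) * cnj (H $$ (j,k)) * v $ j)"
        by (rule sum.cong[OF refl]) (rule sum.swap)
      also have "\<dots> = (\<Sum>k<r. \<Sum>i<t. \<Sum>j<t. cnj (v $ i) * H $$ (i,k) * cnj (H $$ (j,k)) * v $ j)"
        by (rule sum.swap)
      finally show ?thesis .
    qed
    also have "\<dots> = (\<Sum>k<r. cnj (w k) * w k)"
      unfolding w_def by (simp add: sum_distrib_left sum_distrib_right ac_simps)
    finally show ?thesis .
  qed
  ultimately have eq: "\<mu> * (\<Sum>i<t. cnj (v $ i) * v $ i) = (\<Sum>k<r. cnj (w k) * w k)" by simp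
  have cv: "cnj z * z = complex_of_real ((cmod z)\<^sup>2)" for z
    using complex_norm_square[of z] by (simp only: mult.commute)
  have eq2: "\<mu> * complex_of_real N = complex_of_real (\<Sum>k<r. (cmod (w k))\<^sup>2)"
    using eq unfolding N_def cv by simp
  have Npos: "N > 0"
  proof -
    obtain i where i: "i < t" "v $ i \<noteq> 0" using v(1,2) by (auto simp: vec_eq_iff)
    have "(cmod (v $ i))\<^sup>2 \<le> N" unfolding N_def
      by (rule member_le_sum) (use i in auto)
    moreover have "(cmod (v $ i))\<^sup>2 > 0" using i by simp
    ultimately show ?thesis by linarith
  qed
  have "\<mu> = complex_of_real ((\<Sum>k<r. (cmod (w k))\<^sup>2) / N)"
    using eq2 Npos by (simp add: field_simps)
  moreover have "(\<Sum>k<r. (cmod (w k))\<^sup>2) / N \<ge> 0" using Npos by (simp add: sum_nonneg)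
  ultimately show ?thesis by simp
qed

lemma det_eig:
  assumes A: "A \<in> carrier_mat t t" and \<rho>: "\<rho> > 0"
  shows "det (1\<^sub>m t + complex_of_real \<rho> \<cdot>\<^sub>m A) = (\<Prod>\<mu>\<in>#proots (char_poly A). 1 + complex_of_real \<rho> * \<mu>)"
proof -
  define cp where "cp = char_poly A"
  have deg: "degree cp = t" and lc: "coeff cp t = 1" using degree_monic_char_poly[OF A] cp_def by auto
  have cp: "cp = (\<Prod>x\<in>#proots cp. [:-x, 1:])"
    using complex_poly_decompose_multiset[of cp] deg lc by simp
  have size: "size (proots cp) = t" using size_proots_complex deg by simp
  define k where "k = - 1 / complex_of_real \<rho>"
  have meq: "1\<^sub>m t + complex_of_real \<rho> \<cdot>\<^sub>m A = (- complex_of_real \<rho>) \<cdot>\<^sub>m (- char_matrix A k)"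
    using A \<rho> by (intro eq_matI) (auto simp: char_matrix_def k_def field_simps)
  have "det (1\<^sub>m t + complex_of_real \<rho> \<cdot>\<^sub>m A) = (- complex_of_real \<rho>) ^ t * poly cp k"
    unfolding meq cp_def char_poly_matrix[OF A] using char_matrix_closed[OF A, of k] by simp
  also have "poly cp k = (\<Prod>x\<in>#proots cp. k - x)"
    by (subst cp) (simp add: poly_prod_mset)
  also have "(- complex_of_real \<rho>) ^ t * (\<Prod>x\<in>#proots cp. k - x)
      = (\<Prod>x\<in>#proots cp. (- complex_of_real \<rho>) * (k - x))"
    by (subst prod_mset_cmult) (simp only: size)
  also have "\<dots> = (\<Prod>x\<in>#proots cp. 1 + complex_of_real \<rho> * x)"
    using \<rho> by (intro arg_cong[where f=prod_mset] image_mset_cong) (auto simp: k_def field_simps)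
  finally show ?thesis unfolding cp_def .
qed

lemma prod_subset_ge:
  fixes g :: "nat \<Rightarrow> real"
  assumes "A \<subseteq> B" "finite B" "\<And>x. x \<in> B \<Longrightarrow> g x \<ge> 1"
  shows "prod g A \<le> prod g B"
proof -
  have "prod g B = prod g A * prod g (B - A)"
    using assms(1,2) by (metis finite_subset prod.subset_diff mult.commute)
  moreover have "prod g (B - A) \<ge> 1" using assms(3) by (intro prod_ge_1) auto
  moreover have "prod g A \<ge> 0" using assms by (intro prod_nonneg) (force)
  ultimately show ?thesis by (metis mult_cancel_left1 mult_left_mono)
qed

lemma eig:
  assumes H: "H \<in> carrier_mat t r" and \<rho>: "\<rho> > 0" and m: "m = min t r"
  shows "top_eigs m (H * mat_adjoint H) \<in> {..<m} \<rightarrow>\<^sub>E {0..}"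
    and "(\<Prod>i<m. 1 + \<rho> * top_eigs m (H * mat_adjoint H) i)
          \<le> Re (det (1\<^sub>m t + complex_of_real \<rho> \<cdot>\<^sub>m (H * mat_adjoint H)))"
proof -
  define A where "A = H * mat_adjoint H"
  have A: "A \<in> carrier_mat t t" unfolding A_def using H adj_carrier[OF H] by auto
  define R where "R = proots (char_poly A)"
  have cp0: "char_poly A \<noteq> 0" using degree_monic_char_poly[OF A] by auto
  have Rr: "\<mu> = complex_of_real (Re \<mu>) \<and> Re \<mu> \<ge> 0" if "\<mu> \<in># R" for \<mu>
    using HH_root[OF H] that cp0 unfolding R_def A_def by auto
  define X where "X = image_mset Re R"
  define L where "L = rev (sorted_list_of_multiset X)"
  have mL: "mset L = X" unfolding L_def by simp
  have lenL: "length L = t"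
  proof -
    have "length L = size X" using mL by (metis size_mset)
    also have "\<dots> = size R" unfolding X_def by simp
    also have "\<dots> = t" unfolding R_def using size_proots_complex degree_monic_char_poly[OF A] by simp
    finally show ?thesis .
  qed
  have Lnn: "x \<ge> 0" if "x \<in> set L" for x
  proof -
    have "x \<in># X" using that mL by (metis set_mset_mset)
    then obtain \<mu> where "\<mu> \<in># R" "x = Re \<mu>" unfolding X_def by auto
    then show ?thesis using Rr by auto
  qed
  have te: "top_eigs m A = (\<lambda>i\<in>{..<m}. L ! i)" unfolding top_eigs_def L_def X_def R_def by simp
  have mt: "m \<le> t" using m by simp
  show "top_eigs m (H * mat_adjoint H) \<in> {..<m} \<rightarrow>\<^sub>E {0..}"
    unfolding A_def[symmetric] te using mt lenL Lnn by (auto intro!: nth_mem)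
  have "det (1\<^sub>m t + complex_of_real \<rho> \<cdot>\<^sub>m A) = (\<Prod>\<mu>\<in>#R. 1 + complex_of_real \<rho> * \<mu>)"
    unfolding R_def by (rule det_eig[OF A \<rho>])
  also have "\<dots> = (\<Prod>\<mu>\<in>#R. complex_of_real (1 + \<rho> * Re \<mu>))"
    by (intro arg_cong[where f=prod_mset] image_mset_cong) (use Rr in \<open>metis of_real_1 of_real_add of_real_mult\<close>)
  also have "\<dots> = complex_of_real (\<Prod>x\<in>#X. 1 + \<rho> * x)"
    unfolding X_def by (simp add: of_real_hom.hom_prod_mset image_mset.compositionality comp_def)
  finally have "Re (det (1\<^sub>m t + complex_of_real \<rho> \<cdot>\<^sub>m A)) = (\<Prod>x\<in>#X. 1 + \<rho> * x)" by simp
  also have "\<dots> = prod_list (map (\<lambda>x. 1 + \<rho> * x) L)"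
    by (simp add: mL[symmetric] prod_mset_prod_list mset_map[symmetric] del: mset_map)
  also have "\<dots> = (\<Prod>i<t. 1 + \<rho> * L ! i)"
    by (simp add: prod.list_conv_set_nth lenL atLeast0LessThan)
  finally have Rd: "Re (det (1\<^sub>m t + complex_of_real \<rho> \<cdot>\<^sub>m A)) = (\<Prod>i<t. 1 + \<rho> * L ! i)" .
  have "(\<Prod>i<m. 1 + \<rho> * top_eigs m A i) = (\<Prod>i<m. 1 + \<rho> * L ! i)"
    unfolding te by simp
  also have "\<dots> \<le> (\<Prod>i<t. 1 + \<rho> * L ! i)"
    using mt lenL Lnn \<rho> by (intro prod_subset_ge) (auto simp: nth_mem)
  finally show "(\<Prod>i<m. 1 + \<rho> * top_eigs m (H * mat_adjoint H) i)
          \<le> Re (det (1\<^sub>m t + complex_of_real \<rho> \<cdot>\<^sub>m (H * mat_adjoint H)))"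
    using Rd unfolding A_def by simp
qed

lemma cnj_meas: "f \<in> borel_measurable M \<Longrightarrow> (\<lambda>x. cnj (f x :: complex)) \<in> borel_measurable M"
  by (rule measurable_compose[of f _ borel cnj]) (auto intro: borel_measurable_continuous_onI continuous_intros)

lemma det_meas:
  assumes Hd: "\<And>\<omega>. \<omega> \<in> space P \<Longrightarrow> H \<omega> \<in> carrier_mat t r"
    and Hm: "\<And>i j. i < t \<Longrightarrow> j < r \<Longrightarrow> (\<lambda>\<omega>. H \<omega> $$ (i, j)) \<in> borel_measurable P"
  shows "(\<lambda>\<omega>. ennreal (Re (det (1\<^sub>m t + complex_of_real \<rho> \<cdot>\<^sub>m (H \<omega> * mat_adjoint (H \<omega>))))))
           \<in> borel_measurable P"
proof -
  define B where "B = (\<lambda>\<omega> i j. (if i = j then 1 else 0) + complex_of_real \<rho> * (\<Sum>k<r. H \<omega> $$ (i,k) * cnj (H \<omega> $$ (j,k))))"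
  have Bm: "(\<lambda>\<omega>. B \<omega> i j) \<in> borel_measurable P" if "i < t" "j < t" for i j
    unfolding B_def using that
    by (intro borel_measurable_add borel_measurable_times borel_measurable_sum borel_measurable_const cnj_meas Hm) auto
  have eq: "det (1\<^sub>m t + complex_of_real \<rho> \<cdot>\<^sub>m (H \<omega> * mat_adjoint (H \<omega>)))
     = (\<Sum> p \<in> {p. p permutes {0 ..< t}}. signof p * (\<Prod> i = 0 ..< t. B \<omega> i (p i)))"
    if \<omega>: "\<omega> \<in> space P" for \<omega>
  proof -
    have H: "H \<omega> \<in> carrier_mat t r" using Hd \<omega> .
    have C: "1\<^sub>m t + complex_of_real \<rho> \<cdot>\<^sub>m (H \<omega> * mat_adjoint (H \<omega>)) \<in> carrier_mat t t"
      using H adj_carrier[OF H] by auto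
    show ?thesis unfolding det_def'[OF C]
    proof (intro sum.cong refl arg_cong2[where f="(*)"] prod.cong)
      fix p i assume p: "p \<in> {p. p permutes {0 ..< t}}" and i: "i \<in> {0..<t}"
      have pi: "p i < t" using p i by (auto dest: permutes_in_image)
      show "(1\<^sub>m t + complex_of_real \<rho> \<cdot>\<^sub>m (H \<omega> * mat_adjoint (H \<omega>))) $$ (i, p i) = B \<omega> i (p i)"
        using i pi H adj_carrier[OF H] HH_index[OF H _ pi, of i] by (simp add: B_def index_mult_mat(2,3) del: index_mult_mat(1))
    qed
  qed
  have "(\<lambda>\<omega>. (\<Sum> p \<in> {p. p permutes {0 ..< t}}. signof p * (\<Prod> i = 0 ..< t. B \<omega> i (p i)))) \<in> borel_measurable P"
  proof (intro borel_measurable_sum borel_measurable_times borel_measurable_prod)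
    fix p i assume p: "p \<in> {p. p permutes {0 ..< t}}" and i: "i \<in> {0..<t}"
    have pi: "p i < t" using p i by (auto dest: permutes_in_image)
    show "(\<lambda>\<omega>. B \<omega> i (p i)) \<in> borel_measurable P" using Bm i pi by auto
  qed auto
  then have "(\<lambda>\<omega>. det (1\<^sub>m t + complex_of_real \<rho> \<cdot>\<^sub>m (H \<omega> * mat_adjoint (H \<omega>)))) \<in> borel_measurable P"
    by (rule measurable_cong[THEN iffD1, rotated]) (simp add: eq)
  then show ?thesis by measurable
qed

lemma nn_integral_superadd:
  fixes f g :: "'a \<Rightarrow> ennreal"
  shows "integral\<^sup>N M f + integral\<^sup>N M g \<le> integral\<^sup>N M (\<lambda>x. f x + g x)"
proof -
  define A where "A = {a. simple_function M a \<and> a \<le> f}"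
  define B where "B = {b. simple_function M b \<and> b \<le> g}"
  have A0: "(\<lambda>_. 0) \<in> A" unfolding A_def by (auto simp: le_fun_def)
  have B0: "(\<lambda>_. 0) \<in> B" unfolding B_def by (auto simp: le_fun_def)
  have *: "integral\<^sup>S M a + integral\<^sup>S M b \<le> integral\<^sup>N M (\<lambda>x. f x + g x)"
    if a: "a \<in> A" and b: "b \<in> B" for a b
  proof -
    have sa: "simple_function M a" and sb: "simple_function M b" and af: "a \<le> f" and bg: "b \<le> g"
      using a b unfolding A_def B_def by auto
    have "integral\<^sup>S M a + integral\<^sup>S M b = integral\<^sup>S M (\<lambda>x. a x + b x)"
      using sa sb by simp
    also have "\<dots> = integral\<^sup>N M (\<lambda>x. a x + b x)"
      using sa sb by (simp add: nn_integral_eq_simple_integral)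
    also have "\<dots> \<le> integral\<^sup>N M (\<lambda>x. f x + g x)"
      using af bg by (intro nn_integral_mono add_mono) (auto simp: le_fun_def)
    finally show ?thesis .
  qed
  have "integral\<^sup>N M f + integral\<^sup>N M g = (SUP a\<in>A. integral\<^sup>S M a) + (SUP b\<in>B. integral\<^sup>S M b)"
    unfolding nn_integral_def A_def B_def by simp
  also have "\<dots> = (SUP a\<in>A. (SUP b\<in>B. integral\<^sup>S M b) + integral\<^sup>S M a)"
    using A0 by (subst add.commute) (rule ennreal_SUP_add_right, auto)
  also have "\<dots> = (SUP a\<in>A. SUP b\<in>B. integral\<^sup>S M a + integral\<^sup>S M b)"
  proof (rule SUP_cong[OF refl])
    fix a show "(SUP b\<in>B. integral\<^sup>S M b) + integral\<^sup>S M a = (SUP b\<in>B. integral\<^sup>S M a + integral\<^sup>S M b)"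
      using B0 ennreal_SUP_add_right[of B "integral\<^sup>S M a" "integral\<^sup>S M"] by (auto simp: add.commute)
  qed
  also have "\<dots> \<le> integral\<^sup>N M (\<lambda>x. f x + g x)"
    by (intro SUP_least *)
  finally show ?thesis .
qed

lemma ennreal_div_of_nat_le:
  "of_nat (M::nat) * (x::ennreal) \<le> X \<Longrightarrow> M \<ge> 1 \<Longrightarrow> x \<le> X / of_nat M"
  by (smt (verit, ccfv_SIG) div_by_1 divide_ennreal
    divide_right_mono_ennreal ennreal_1 ennreal_of_nat_eq_real_of_nat
    ennreal_times_divide frac_eq_eq more_arith_simps(6) mult_of_nat_commute
    one_of_nat_le_iff)


lemma nn_integral_sum_superadd:
  fixes f :: "'b \<Rightarrow> 'a \<Rightarrow> ennreal"
  assumes "finite S"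
  shows "(\<Sum>j\<in>S. integral\<^sup>N M (f j)) \<le> integral\<^sup>N M (\<lambda>x. \<Sum>j\<in>S. f j x)"
  using assms
proof (induction S rule: finite_induct)
  case empty then show ?case by simp
next
  case (insert a S)
  have "(\<Sum>j\<in>insert a S. integral\<^sup>N M (f j)) = integral\<^sup>N M (f a) + (\<Sum>j\<in>S. integral\<^sup>N M (f j))"
    using insert by simp
  also have "\<dots> \<le> integral\<^sup>N M (f a) + integral\<^sup>N M (\<lambda>x. \<Sum>j\<in>S. f j x)"
    using insert by (simp add: add_left_mono)
  also have "\<dots> \<le> integral\<^sup>N M (\<lambda>x. f a x + (\<Sum>j\<in>S. f j x))"
    by (rule nn_integral_superadd)
  also have "\<dots> = integral\<^sup>N M (\<lambda>x. \<Sum>j\<in>insert a S. f j x)"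
    using insert by simp
  finally show ?case .
qed


theorem lemma3:
  fixes P :: "'w measure"
    and H :: "'w \<Rightarrow> complex mat"
    and t r n M :: nat
    and \<rho> :: real
    and f :: "nat \<Rightarrow> (nat \<Rightarrow> real) \<Rightarrow> complex mat"
    and g :: "(nat \<times> nat \<Rightarrow> complex) \<times> (nat \<Rightarrow> real) \<Rightarrow> nat"
  assumes "prob_space P"
    and "\<rho> > 0"
    and "n \<ge> 1"
    and "M \<ge> 1"
    and H_dim: "\<And>\<omega>. \<omega> \<in> space P \<Longrightarrow> H \<omega> \<in> carrier_mat t r"
    and H_meas: "\<And>i j. i < t \<Longrightarrow> j < r \<Longrightarrow> (\<lambda>\<omega>. H \<omega> $$ (i, j)) \<in> borel_measurable P"
    and f_dim: "\<And>j l. j \<in> {1..M} \<Longrightarrow> f j l \<in> carrier_mat n (min t r)"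
    and f_pow: "\<And>j l. j \<in> {1..M} \<Longrightarrow> l \<in> {..<min t r} \<rightarrow>\<^sub>E {0..} \<Longrightarrow>
                 (\<Sum>i<min t r. \<Sum>k<n. (cmod (f j l $$ (k, i)))\<^sup>2) \<le> real n * \<rho>"
    and f_meas: "\<And>j k i. j \<in> {1..M} \<Longrightarrow> k < n \<Longrightarrow> i < min t r \<Longrightarrow> (\<lambda>l. f j l $$ (k, i)) \<in> borel_measurable (PiM {..<min t r} (\<lambda>_. borel))"
    and g_meas: "g \<in> measurable (PiM ({..<n} \<times> {..<min t r}) (\<lambda>_. borel) \<Otimes>\<^sub>M PiM {..<min t r} (\<lambda>_. borel))
                   (count_space UNIV)"
  shows
    "(let m = min t r;
          \<Lambda> = (\<lambda>\<omega>. top_eigs m (H \<omega> * mat_adjoint (H \<omega>)));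
          succ = (\<lambda>j. \<integral>\<^sup>+ \<omega>. emeasure (aux_chan n m (f j (\<Lambda> \<omega>)) (\<Lambda> \<omega>))
                         {Y \<in> space (aux_chan n m (f j (\<Lambda> \<omega>)) (\<Lambda> \<omega>)). g (Y, \<Lambda> \<omega>) = j} \<partial>P);
          eps' = (MAX j\<in>{1..M}. 1 - succ j);
          EdetH = (\<integral>\<^sup>+ \<omega>. ennreal (Re (det (1\<^sub>m t + complex_of_real \<rho> \<cdot>\<^sub>m (H \<omega> * mat_adjoint (H \<omega>))))) \<partial>P)
      in 1 - eps' \<le> ennreal (c_rt_factor n ^ m) * EdetH / of_nat M)"
proof -
  define m where "m = min t r"
  define \<Lambda> where "\<Lambda> = (\<lambda>\<omega>. top_eigs m (H \<omega> * mat_adjoint (H \<omega>)))"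
  define F where "F = (\<lambda>j \<omega>. emeasure (aux_chan n m (f j (\<Lambda> \<omega>)) (\<Lambda> \<omega>))
                         {Y \<in> space (aux_chan n m (f j (\<Lambda> \<omega>)) (\<Lambda> \<omega>)). g (Y, \<Lambda> \<omega>) = j})"
  define succ where "succ = (\<lambda>j. integral\<^sup>N P (F j))"
  define eps' where "eps' = (MAX j\<in>{1..M}. 1 - succ j)"
  define D where "D = (\<lambda>\<omega>. ennreal (Re (det (1\<^sub>m t + complex_of_real \<rho> \<cdot>\<^sub>m (H \<omega> * mat_adjoint (H \<omega>))))))"
  define EdetH where "EdetH = integral\<^sup>N P D"
  define c where "c = c_rt_factor n ^ m"
  have c0: "c \<ge> 0" unfolding c_def using c_rt_nonneg by simp
  have pw: "(\<Sum>j\<in>{1..M}. F j \<omega>) \<le> ennreal c * D \<omega>" if \<omega>: "\<omega> \<in> space P" for \<omega>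
  proof -
    have Hd: "H \<omega> \<in> carrier_mat t r" using H_dim \<omega> .
    have l: "\<Lambda> \<omega> \<in> {..<m} \<rightarrow>\<^sub>E {0..}" unfolding \<Lambda>_def
      using eig(1)[OF Hd \<open>\<rho> > 0\<close> m_def] .
    have "(\<Sum>j\<in>{1..M}. F j \<omega>) \<le> ennreal (c_rt_factor n ^ m * (\<Prod>i<m. 1 + \<rho> * \<Lambda> \<omega> i))"
      unfolding F_def
      by (rule key[OF \<open>n \<ge> 1\<close> \<open>\<rho> > 0\<close> l]) (use f_dim f_pow l g_meas in \<open>auto simp: m_def\<close>)
    also have "\<dots> \<le> ennreal (c * Re (det (1\<^sub>m t + complex_of_real \<rho> \<cdot>\<^sub>m (H \<omega> * mat_adjoint (H \<omega>)))))"
      unfolding c_def \<Lambda>_def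
      by (intro ennreal_leI mult_left_mono eig(2)[OF Hd \<open>\<rho> > 0\<close> m_def]) (use c0 c_def in auto)
    also have "\<dots> = ennreal c * D \<omega>" unfolding D_def using c0 by (simp add: ennreal_mult')
    finally show ?thesis .
  qed
  have Dm: "D \<in> borel_measurable P" unfolding D_def by (rule det_meas[OF H_dim H_meas])
  have "(\<Sum>j\<in>{1..M}. succ j) \<le> integral\<^sup>N P (\<lambda>\<omega>. \<Sum>j\<in>{1..M}. F j \<omega>)"
    unfolding succ_def by (rule nn_integral_sum_superadd) simp
  also have "\<dots> \<le> integral\<^sup>N P (\<lambda>\<omega>. ennreal c * D \<omega>)"
    by (rule nn_integral_mono) (use pw in auto)
  also have "\<dots> = ennreal c * EdetH" unfolding EdetH_def
    by (rule nn_integral_cmult[OF Dm])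
  finally have sumb: "(\<Sum>j\<in>{1..M}. succ j) \<le> ennreal c * EdetH" .
  have le: "1 - eps' \<le> succ j" if "j \<in> {1..M}" for j
  proof -
    have "1 - succ j \<le> eps'" unfolding eps'_def using that by (intro Max_ge) auto
    then have "1 - eps' \<le> 1 - (1 - succ j)" by (intro ennreal_minus_mono) auto
    also have "\<dots> \<le> succ j"
    proof (cases "succ j \<le> 1")
      case True then show ?thesis by (simp add: diff_diff_ennreal)
    next
      case False then have "1 - succ j = 0" by (simp add: diff_eq_0_iff_ennreal)
      then show ?thesis using False by simp
    qed
    finally show ?thesis .
  qed
  have "of_nat M * (1 - eps') = (\<Sum>j\<in>{1..M}. 1 - eps')" by simp
  also have "\<dots> \<le> (\<Sum>j\<in>{1..M}. succ j)" by (rule sum_mono) (rule le)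
  also have "\<dots> \<le> ennreal c * EdetH" by (rule sumb)
  finally have main: "of_nat M * (1 - eps') \<le> ennreal c * EdetH" .
  have fin: "1 - eps' \<le> ennreal c * EdetH / of_nat M"
    using main \<open>M \<ge> 1\<close> by (rule ennreal_div_of_nat_le)
  show ?thesis unfolding Let_def
    using fin unfolding eps'_def succ_def F_def \<Lambda>_def m_def c_def EdetH_def D_def .
qed
end
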